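(* Let $N$ be an orchard network on $X\subseteq[n]$ and let $S=s_1\cdots s_k$ ($k\ge1$) be a sequence of pairs of elements of $[n]$. Then $S$ is reducible in $N$ if and only if $S$ is reducible in $\boldsymbol\mu(N)$. Moreover, in that case $\boldsymbol\mu(N^S)=\boldsymbol\mu(N)^S$.
   Context: A (binary) phylogenetic network on a finite set $X\subseteq[n]=\{1,\dots,n\}$ is a directed acyclic graph $N=(V,A)$ without parallel arcs in which every node is exactly one of: the root (indegree 0, outdegree 1; there is exactly one), a leaf (indegree 1, outdegree 0), a tree node (indegree 1, outdegree 2), or a reticulation (indegree 2, outdegree 1); the leaves are identified with the elements of $X$. $V_T(N)$ denotes the set of leaves and tree nodes, $V_H(N)$ the set of reticulations. $m(u,v)$ is the number of directed paths from $u$ to $v$ (trivial paths allowed). Extended $\mu$-vectors: $\mu_i(u)=m(u,i)$ for $i\in[n]$ (0 if $i\notin X$), $\mu_0(u)=\sum_{h\in V_H(N)} m(u,h)$, $\mu(u)=(\mu_0(u),\dots,\mu_n(u))$; $\boldsymbol\mu(N)$ is the multiset $\{\mu(u)\mid u\in V_T(N)\}$. $\delta_S$ is the 0/1 indicator vector of $S\subseteq\{0,\dots,n\}$ and $\delta_{j_1,\dots,j_k}=\delta_{\{j_1,\dots,j_k\}}$. Network reductions: for distinct leaves $i,j$ with parents $p_i,p_j$, $(i,j)$ is a cherry of $N$ if $p_i=p_j$, a reticulated-cherry of $N$ if $p_i$ is a reticulation, $p_j$ is a tree node and $p_j$ is a parent of $p_i$, and reducible if either. Suppressing a node with indegree 1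 and outdegree 1 means deleting it and its two arcs and adding an arc from its parent to its child. $N^{(i,j)}$: if $(i,j)$ is a cherry, delete leaf $i$ and its incoming arc, then suppress $p_i$; if a reticulated-cherry, delete the arc $p_jp_i$ and suppress $p_i$ and $p_j$. A sequence $S=s_1\cdots s_k$ is reducible in $N$ if $s_1$ is reducible in $N$ and each $s_t$ is reducible in the network obtained from $N$ by successively reducing $s_1,\dots,s_{t-1}$; $N^S$ is the final network; $S$ is complete if $N^S=I_x$ (a root joined by an arc to a single leaf $x$). $N$ is orchard if it has a complete reducible sequence. Multiset reductions: for a finite multiset $\boldsymbol\mu$ of vectors of nonnegative integers indexed by $0,\dots,n$ and distinct $i,j\in[n]$: $(i,j)$ is a cherry of $\boldsymbol\mu$ if $\delta_{i,j}\in\boldsymbol\mu$ with multiplicity exactly 1 and every $\mu\in\boldsymbol\mu$ other than $\delta_i,\delta_j$ satisfies $\mu_i=\mu_j$; $(i,j)$ is a reticulated-cherry of $\boldsymbol\mu$ if $\delta_{0,i,j}\in\boldsymbol\mu$ with multiplicity exactly 1 and every $\mu\in\boldsymbol\mu$ other than $\delta_i,\delta_j$ satisfies $\mu_0\ge\mu_i\ge\mu_j$; $(i,j)$ is reducible in $\boldsymbol\mu$ if it is either. The reduction $\boldsymbol\mu^{(i,j)}$ is the multiset $\{\mu-\mu_i\delta_i \mid \mu\in\boldsymbol\mu\setminus\{\delta_i,\delta_{i,j}\}\}$ if $(i,j)$ is a cherry of $\boldsymbol\mu$, and $\{\mu-\mu_i\delta_0-\mu_j\delta_i\mid \mu\in\boldsymbol\mu\setminus\{\delta_{0,i,j}\}\}$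 if it is a reticulated-cherry of $\boldsymbol\mu$ (it is used only when exactly one of these holds). A sequence $S=s_1\cdots s_k$ is reducible in $\boldsymbol\mu$ if $s_1$ is reducible in $\boldsymbol\mu$ and each $s_t$ is reducible in $(\cdots(\boldsymbol\mu^{s_1})\cdots)^{s_{t-1}}$; then $\boldsymbol\mu^S=(\cdots(\boldsymbol\mu^{s_1})\cdots)^{s_k}$. *)

theory Defs
  imports Main "HOL-Library.Multiset"
begin

text \<open>Arcs form a multiset (so that reductions, which may create
parallel arcs, are modelled literally); an input network has no parallel arcs.\<close>

datatype 'v pnode = Leaf nat | Inner 'v

type_synonym 'v net = "'v pnode set \<times> ('v pnode \<times> 'v pnode) multiset"

definition indeg :: "('a \<times> 'a) multiset \<Rightarrow> 'a \<Rightarrow> nat" where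
  "indeg A v = size (filter_mset (\<lambda>(x,y). y = v) A)"

definition outdeg :: "('a \<times> 'a) multiset \<Rightarrow> 'a \<Rightarrow> nat" where
  "outdeg A v = size (filter_mset (\<lambda>(x,y). x = v) A)"

definition is_root_node :: "'v net \<Rightarrow> 'v pnode \<Rightarrow> bool" where
  "is_root_node N v \<longleftrightarrow> v \<in> fst N \<and> indeg (snd N) v = 0 \<and> outdeg (snd N) v = 1"

definition is_leaf_node :: "'v net \<Rightarrow> 'v pnode \<Rightarrow> bool" where
  "is_leaf_node N v \<longleftrightarrow> v \<in> fst N \<and> indeg (snd N) v = 1 \<and> outdeg (snd N) v = 0"

definition is_tree_node :: "'v net \<Rightarrow> 'v pnode \<Rightarrow> bool" where
  "is_tree_node N v \<longleftrightarrow> v \<in> fst N \<and> indeg (snd N) v = 1 \<and> outdeg (snd N) v = 2"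

definition is_ret_node :: "'v net \<Rightarrow> 'v pnode \<Rightarrow> bool" where
  "is_ret_node N v \<longleftrightarrow> v \<in> fst N \<and> indeg (snd N) v = 2 \<and> outdeg (snd N) v = 1"

definition is_network :: "nat \<Rightarrow> nat set \<Rightarrow> 'v net \<Rightarrow> bool" where
  "is_network n X N \<longleftrightarrow>
     (let V = fst N; A = snd N in
       finite V \<and>
       X \<subseteq> {1..n} \<and>
       (\<forall>(u,v) \<in># A. u \<in> V \<and> v \<in> V) \<and>
       (\<forall>a. count A a \<le> 1) \<and>
       acyclic (set_mset A) \<and>
       (\<exists>!r. r \<in> V \<and> indeg A r = 0) \<and>
       (\<forall>v \<in> V. is_root_node N v \<or> is_leaf_node N v \<or> is_tree_node N v \<or> is_ret_node N v) \<and>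
       {v \<in> V. is_leaf_node N v} = Leaf ` X \<and>
       V \<inter> range Leaf = Leaf ` X)"

definition V_T :: "'v net \<Rightarrow> 'v pnode set" where
  "V_T N = {v \<in> fst N. is_leaf_node N v \<or> is_tree_node N v}"

definition V_H :: "'v net \<Rightarrow> 'v pnode set" where
  "V_H N = {v \<in> fst N. is_ret_node N v}"

text \<open>Number of directed paths from u to v (trivial path allowed), counted with
arc multiplicities.\<close>
definition npaths :: "('a \<times> 'a) multiset \<Rightarrow> 'a \<Rightarrow> 'a \<Rightarrow> nat" where
  "npaths A u v = (\<Sum>p \<in> {p. p \<noteq> [] \<and> hd p = u \<and> last p = v \<and>
                          successively (\<lambda>x y. (x,y) \<in># A) p}.
                    prod_list (map (count A) (zip p (tl p))))"

text \<open>Extended mu-vectors, indexed by 0..n (entries beyond n are 0).\<close>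
definition mu_vec :: "nat \<Rightarrow> 'v net \<Rightarrow> 'v pnode \<Rightarrow> (nat \<Rightarrow> nat)" where
  "mu_vec n N u = (\<lambda>k. if k = 0 then (\<Sum>h \<in> V_H N. npaths (snd N) u h)
                      else if k \<le> n \<and> Leaf k \<in> fst N then npaths (snd N) u (Leaf k)
                      else 0)"

definition mu_net :: "nat \<Rightarrow> 'v net \<Rightarrow> (nat \<Rightarrow> nat) multiset" where
  "mu_net n N = image_mset (mu_vec n N) (mset_set (V_T N))"

definition par :: "('a \<times> 'a) multiset \<Rightarrow> 'a \<Rightarrow> 'a" where
  "par A v = (THE u. (u,v) \<in># A)"

definition chld :: "('a \<times> 'a) multiset \<Rightarrow> 'a \<Rightarrow> 'a" where
  "chld A v = (THE c. (v,c) \<in># A)"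

definition suppress :: "'v net \<Rightarrow> 'v pnode \<Rightarrow> 'v net" where
  "suppress N w = (let p = par (snd N) w; c = chld (snd N) w in
     (fst N - {w}, snd N - {#(p,w), (w,c)#} + {#(p,c)#}))"

definition net_cherry :: "'v net \<Rightarrow> nat \<times> nat \<Rightarrow> bool" where
  "net_cherry N s = (case s of (i,j) \<Rightarrow>
     i \<noteq> j \<and> is_leaf_node N (Leaf i) \<and> is_leaf_node N (Leaf j) \<and>
     par (snd N) (Leaf i) = par (snd N) (Leaf j))"

definition net_ret_cherry :: "'v net \<Rightarrow> nat \<times> nat \<Rightarrow> bool" where
  "net_ret_cherry N s = (case s of (i,j) \<Rightarrow>
     i \<noteq> j \<and> is_leaf_node N (Leaf i) \<and> is_leaf_node N (Leaf j) \<and>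
     is_ret_node N (par (snd N) (Leaf i)) \<and> is_tree_node N (par (snd N) (Leaf j)) \<and>
     (par (snd N) (Leaf j), par (snd N) (Leaf i)) \<in># snd N)"

definition net_reducible :: "'v net \<Rightarrow> nat \<times> nat \<Rightarrow> bool" where
  "net_reducible N s \<longleftrightarrow> net_cherry N s \<or> net_ret_cherry N s"

definition net_red :: "'v net \<Rightarrow> nat \<times> nat \<Rightarrow> 'v net" where
  "net_red N s = (case s of (i,j) \<Rightarrow>
     (let pi = par (snd N) (Leaf i); pj = par (snd N) (Leaf j) in
      if net_cherry N s then
        suppress (fst N - {Leaf i}, snd N - {#(pi, Leaf i)#}) pi
      else
        suppress (suppress (fst N, snd N - {#(pj, pi)#}) pi) pj))"

fun net_seq_reducible :: "'v net \<Rightarrow> (nat \<times> nat) list \<Rightarrow> bool" where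
  "net_seq_reducible N [] = True"
| "net_seq_reducible N (s # S) = (net_reducible N s \<and> net_seq_reducible (net_red N s) S)"

fun net_seq_red :: "'v net \<Rightarrow> (nat \<times> nat) list \<Rightarrow> 'v net" where
  "net_seq_red N [] = N"
| "net_seq_red N (s # S) = net_seq_red (net_red N s) S"

definition is_I :: "'v net \<Rightarrow> nat \<Rightarrow> bool" where
  "is_I N x \<longleftrightarrow> (\<exists>r. r \<noteq> Leaf x \<and> fst N = {r, Leaf x} \<and> snd N = {#(r, Leaf x)#})"

definition orchard :: "'v net \<Rightarrow> bool" where
  "orchard N \<longleftrightarrow> (\<exists>S x. net_seq_reducible N S \<and> is_I (net_seq_red N S) x)"

definition delta :: "nat set \<Rightarrow> (nat \<Rightarrow> nat)" where
  "delta S = (\<lambda>k. if k \<in> S then 1 else 0)"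

definition ms_cherry :: "nat \<Rightarrow> (nat \<Rightarrow> nat) multiset \<Rightarrow> nat \<times> nat \<Rightarrow> bool" where
  "ms_cherry n M s = (case s of (i,j) \<Rightarrow>
     i \<noteq> j \<and> i \<in> {1..n} \<and> j \<in> {1..n} \<and>
     count M (delta {i,j}) = 1 \<and>
     (\<forall>\<mu> \<in># M. \<mu> \<noteq> delta {i} \<and> \<mu> \<noteq> delta {j} \<longrightarrow> \<mu> i = \<mu> j))"

definition ms_ret_cherry :: "nat \<Rightarrow> (nat \<Rightarrow> nat) multiset \<Rightarrow> nat \<times> nat \<Rightarrow> bool" where
  "ms_ret_cherry n M s = (case s of (i,j) \<Rightarrow>
     i \<noteq> j \<and> i \<in> {1..n} \<and> j \<in> {1..n} \<and>
     count M (delta {0,i,j}) = 1 \<and>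
     (\<forall>\<mu> \<in># M. \<mu> \<noteq> delta {i} \<and> \<mu> \<noteq> delta {j} \<longrightarrow> \<mu> 0 \<ge> \<mu> i \<and> \<mu> i \<ge> \<mu> j))"

definition ms_reducible :: "nat \<Rightarrow> (nat \<Rightarrow> nat) multiset \<Rightarrow> nat \<times> nat \<Rightarrow> bool" where
  "ms_reducible n M s \<longleftrightarrow> ms_cherry n M s \<or> ms_ret_cherry n M s"

definition ms_red :: "nat \<Rightarrow> (nat \<Rightarrow> nat) multiset \<Rightarrow> nat \<times> nat \<Rightarrow> (nat \<Rightarrow> nat) multiset option" where
  "ms_red n M s = (case s of (i,j) \<Rightarrow>
     if ms_cherry n M s \<and> \<not> ms_ret_cherry n M s then
       Some (image_mset (\<lambda>\<mu>. \<mu>(i := 0)) (M - {#delta {i}, delta {i,j}#}))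
     else if ms_ret_cherry n M s \<and> \<not> ms_cherry n M s then
       Some (image_mset (\<lambda>\<mu>. \<mu>(0 := \<mu> 0 - \<mu> i, i := \<mu> i - \<mu> j)) (M - {#delta {0,i,j}#}))
     else None)"

fun ms_seq_reducible :: "nat \<Rightarrow> (nat \<Rightarrow> nat) multiset \<Rightarrow> (nat \<times> nat) list \<Rightarrow> bool" where
  "ms_seq_reducible n M [] = True"
| "ms_seq_reducible n M (s # S) =
     (ms_reducible n M s \<and>
      (S \<noteq> [] \<longrightarrow> (case ms_red n M s of None \<Rightarrow> False | Some M' \<Rightarrow> ms_seq_reducible n M' S)))"

fun ms_seq_red :: "nat \<Rightarrow> (nat \<Rightarrow> nat) multiset \<Rightarrow> (nat \<times> nat) list \<Rightarrow> (nat \<Rightarrow> nat) multiset option" where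
  "ms_seq_red n M [] = Some M"
| "ms_seq_red n M (s # S) = (case ms_red n M s of None \<Rightarrow> None | Some M' \<Rightarrow> ms_seq_red n M' S)"

end

theory Submission
  imports Defs
begin


definition paths :: "('a\<times>'a) multiset \<Rightarrow> 'a \<Rightarrow> 'a \<Rightarrow> 'a list set" where
 "paths A u v = {p. p \<noteq> [] \<and> hd p = u \<and> last p = v \<and> successively (\<lambda>x y. (x,y) \<in># A) p}"
definition wt :: "('a\<times>'a) multiset \<Rightarrow> 'a list \<Rightarrow> nat" where
 "wt A p = prod_list (map (count A) (zip p (tl p)))"

lemma snd_in: "(u,c) \<in># A \<Longrightarrow> c \<in> snd ` set_mset A"
  by (rule rev_image_eqI[of "(u,c)"]) simp_all

lemma fst_in: "(u,c) \<in># A \<Longrightarrow> u \<in> fst ` set_mset A"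
  by (rule rev_image_eqI[of "(u,c)"]) simp_all

lemma npaths_alt: "npaths A u v = (\<Sum>p\<in>paths A u v. wt A p)"
  by (simp add: npaths_def paths_def wt_def)

lemma succ_trancl:
  "successively (\<lambda>x y. (x,y) \<in> R) p \<Longrightarrow> i < j \<Longrightarrow> j < length p \<Longrightarrow> (p!i, p!j) \<in> R\<^sup>+"
proof (induction p arbitrary: i j)
  case Nil thus ?case by simp
next
  case (Cons x xs)
  then obtain y ys where xs: "xs = y # ys" by (cases xs) auto
  have xy: "(x,y) \<in> R" and sxs: "successively (\<lambda>x y. (x,y) \<in> R) xs" using Cons.prems(1) xs by auto
  show ?case
  proof (cases i)
    case 0
    show ?thesis
    proof (cases "j = 1")
      case True thus ?thesis using 0 xy xs by simp
    next
      case False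
      then have "(xs!0, xs!(j-1)) \<in> R\<^sup>+" using Cons.IH[OF sxs, of 0 "j-1"] Cons.prems 0 by simp
      hence "(x, xs!(j-1)) \<in> R\<^sup>+" using xy xs by (simp add: trancl_into_trancl2)
      thus ?thesis using 0 False Cons.prems(2) by (cases j) auto
    qed
  next
    case (Suc i')
    then obtain j' where j: "j = Suc j'" using Cons.prems(2) by (cases j) auto
    show ?thesis using Cons.IH[OF sxs, of i' j'] Cons.prems Suc j by simp
  qed
qed

lemma succ_distinct:
  assumes "acyclic R" "successively (\<lambda>x y. (x,y) \<in> R) p" shows "distinct p"
proof -
  have "p!i \<noteq> p!j" if "i < j" "j < length p" for i j
    using succ_trancl[OF assms(2) that] assms(1) by (auto simp: acyclic_def)
  thus ?thesis unfolding distinct_conv_nth by (metis linorder_neqE_nat)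
qed

lemma succ_rtrancl:
  "successively (\<lambda>x y. (x,y) \<in> R) p \<Longrightarrow> p \<noteq> [] \<Longrightarrow> (hd p, last p) \<in> R\<^sup>*"
proof (induction p)
  case Nil thus ?case by simp
next
  case (Cons x xs)
  show ?case
  proof (cases xs)
    case Nil thus ?thesis by simp
  next
    case (Cons y ys)
    with Cons.prems Cons.IH show ?thesis by (auto intro: converse_rtrancl_into_rtrancl)
  qed
qed

lemma paths_finite:
  assumes "acyclic (set_mset A)" shows "finite (paths A u v)"
proof (rule finite_subset)
  show "paths A u v \<subseteq> {xs. set xs \<subseteq> insert u (snd ` set_mset A) \<and> distinct xs}"
  proof
    fix p assume p: "p \<in> paths A u v"
    hence s: "successively (\<lambda>x y. (x,y) \<in> set_mset A) p" and ne: "p \<noteq> []" and h: "hd p = u"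
      by (auto simp: paths_def)
    have "distinct p" using succ_distinct[OF assms s] .
    moreover have "set p \<subseteq> insert u (snd ` set_mset A)"
    proof
      fix x assume "x \<in> set p"
      then obtain k where k: "k < length p" "x = p!k" by (auto simp: in_set_conv_nth)
      show "x \<in> insert u (snd ` set_mset A)"
      proof (cases k)
        case 0 thus ?thesis using k h ne by (simp add: hd_conv_nth)
      next
        case (Suc k')
        have "(p!k', p!Suc k') \<in> set_mset A" using successively_nth[OF s] k Suc by simp
        thus ?thesis using k Suc by (metis image_iff insertI2 snd_conv)
      qed
    qed
    ultimately show "p \<in> {xs. set xs \<subseteq> insert u (snd ` set_mset A) \<and> distinct xs}" by simp
  qed
  show "finite {xs. set xs \<subseteq> insert u (snd ` set_mset A) \<and> distinct xs}"
    by (rule finite_subset_distinct) simp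
qed

lemma npaths_pos_rtrancl: "npaths A u v \<noteq> 0 \<Longrightarrow> (u,v) \<in> (set_mset A)\<^sup>*"
proof -
  assume "npaths A u v \<noteq> 0"
  then obtain p where "p \<in> paths A u v" unfolding npaths_alt
    using sum.not_neutral_contains_not_neutral by blast
  thus ?thesis using succ_rtrancl[of "set_mset A" p] by (auto simp: paths_def)
qed

lemma paths_Cons:
  "paths A u v = (if u = v then {[u]} else {}) \<union> (\<Union>c\<in>{c. (u,c) \<in># A}. (#) u ` paths A c v)"
proof (intro equalityI subsetI)
  fix p assume p: "p \<in> paths A u v"
  then obtain rest where pr: "p = u # rest" by (cases p) (auto simp: paths_def)
  show "p \<in> (if u = v then {[u]} else {}) \<union> (\<Union>c\<in>{c. (u,c) \<in># A}. (#) u ` paths A c v)"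
  proof (cases rest)
    case Nil thus ?thesis using p pr by (auto simp: paths_def)
  next
    case (Cons c r)
    have "rest \<in> paths A c v" "(u,c) \<in># A" using p pr Cons by (auto simp: paths_def)
    thus ?thesis using pr by blast
  qed
next
  fix p assume "p \<in> (if u = v then {[u]} else {}) \<union> (\<Union>c\<in>{c. (u,c) \<in># A}. (#) u ` paths A c v)"
  thus "p \<in> paths A u v"
    by (auto simp: paths_def successively_Cons split: if_splits)
qed

lemma wt_Cons: "q \<noteq> [] \<Longrightarrow> wt A (u # q) = count A (u, hd q) * wt A q"
  by (cases q) (auto simp: wt_def)

lemma npaths_fwd0:
  assumes ac: "acyclic (set_mset A)"
  shows "npaths A u v = (if u = v then 1 else 0) + (\<Sum>c\<in>{c. (u,c) \<in># A}. count A (u,c) * npaths A c v)"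
proof -
  let ?S = "{c. (u,c) \<in># A}"
  have finS: "finite ?S" by (rule finite_subset[of _ "snd ` set_mset A"]) force+
  have fin: "\<And>c. finite (paths A c v)" using paths_finite[OF ac] .
  have d1: "(if u = v then {[u]} else {}) \<inter> (\<Union>c\<in>?S. (#) u ` paths A c v) = {}"
    by (auto simp: paths_def)
  have "npaths A u v = (\<Sum>p\<in>(if u = v then {[u]} else {}). wt A p) + (\<Sum>p\<in>(\<Union>c\<in>?S. (#) u ` paths A c v). wt A p)"
    unfolding npaths_alt paths_Cons[of A u v]
    by (rule sum.union_disjoint) (use finS fin d1 in auto)
  also have "(\<Sum>p\<in>(if u = v then {[u]} else {}). wt A p) = (if u = v then 1 else 0)"
    by (simp add: wt_def)
  also have "(\<Sum>p\<in>(\<Union>c\<in>?S. (#) u ` paths A c v). wt A p) = (\<Sum>c\<in>?S. (\<Sum>p\<in>(#) u ` paths A c v. wt A p))"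
    by (rule sum.UNION_disjoint) (use finS fin in \<open>auto simp: paths_def\<close>)
  also have "\<dots> = (\<Sum>c\<in>?S. count A (u,c) * npaths A c v)"
  proof (rule sum.cong[OF refl])
    fix c assume "c \<in> ?S"
    have "(\<Sum>p\<in>(#) u ` paths A c v. wt A p) = (\<Sum>q\<in>paths A c v. wt A (u # q))"
      by (rule sum.reindex_cong[of "(#) u"]) (auto simp: inj_on_def)
    also have "\<dots> = (\<Sum>q\<in>paths A c v. count A (u,c) * wt A q)"
      by (rule sum.cong) (auto simp: wt_Cons paths_def)
    finally show "(\<Sum>p\<in>(#) u ` paths A c v. wt A p) = count A (u,c) * npaths A c v"
      by (simp add: npaths_alt sum_distrib_left)
  qed
  finally show ?thesis .
qed



lemma npaths_fwd:
  assumes ac: "acyclic (set_mset A)" and T: "finite T" "{c. (u,c) \<in># A} \<subseteq> T"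
  shows "npaths A u v = (if u = v then 1 else 0) + (\<Sum>c\<in>T. count A (u,c) * npaths A c v)"
proof -
  have "(\<Sum>c\<in>{c. (u,c) \<in># A}. count A (u,c) * npaths A c v) = (\<Sum>c\<in>T. count A (u,c) * npaths A c v)"
    by (rule sum.mono_neutral_left) (use T in \<open>auto simp: not_in_iff\<close>)
  thus ?thesis using npaths_fwd0[OF ac, of u v] by linarith
qed

lemma acyc_cycle: "acyclic R \<Longrightarrow> (u,c) \<in> R \<Longrightarrow> (c,u) \<in> R\<^sup>* \<Longrightarrow> False"
  by (meson acyclic_def rtrancl_into_trancl2)

lemma npaths_self: assumes ac: "acyclic (set_mset A)" shows "npaths A u u = 1"
proof -
  have "(\<Sum>c\<in>{c. (u,c) \<in># A}. count A (u,c) * npaths A c u) = 0"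
  proof (rule sum.neutral, rule ballI)
    fix c assume "c \<in> {c. (u,c) \<in># A}"
    hence "npaths A c u = 0" using npaths_pos_rtrancl[of A c u] acyc_cycle[OF ac] by blast
    thus "count A (u,c) * npaths A c u = 0" by simp
  qed
  moreover have "npaths A u u = 1 + (\<Sum>c\<in>{c. (u,c) \<in># A}. count A (u,c) * npaths A c u)"
    using npaths_fwd0[OF ac, of u u] by (simp only: if_True refl)
  ultimately show ?thesis by linarith
qed

lemma npaths_reach:
  assumes ac: "acyclic (set_mset A)" and r: "(u,v) \<in> (set_mset A)\<^sup>*" shows "npaths A u v \<ge> 1"
  using r
proof (induction rule: converse_rtrancl_induct)
  case base thus ?case using npaths_self[OF ac] by simp
next
  case (step u c)
  have fin: "finite {c. (u,c) \<in># A}" by (rule finite_subset[of _ "snd ` set_mset A"]) (use snd_in in fast, simp)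
  have "count A (u,c) * npaths A c v \<le> (\<Sum>c\<in>{c. (u,c) \<in># A}. count A (u,c) * npaths A c v)"
    by (rule member_le_sum) (use step fin in auto)
  moreover have "count A (u,c) \<ge> 1" using step by simp
  ultimately have "1 \<le> (\<Sum>c\<in>{c. (u,c) \<in># A}. count A (u,c) * npaths A c v)"
  proof -
    have "1 \<le> count A (u,c) * npaths A c v" using step.IH \<open>count A (u,c) \<ge> 1\<close> by (simp add: Suc_le_eq)
    thus ?thesis using \<open>count A (u,c) * npaths A c v \<le> _\<close> by linarith
  qed
  thus ?case using npaths_fwd0[OF ac, of u v] by linarith
qed

lemma acyclic_sub: "acyclic (set_mset A) \<Longrightarrow> B \<subseteq># A \<Longrightarrow> acyclic (set_mset B)"
  by (meson acyclic_subset set_mset_mono)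

lemma npaths_arc:
  assumes ac: "acyclic (set_mset A)" and ab: "(a,b) \<in># A"
  shows "npaths A u x = npaths (A - {#(a,b)#}) u x
           + npaths (A - {#(a,b)#}) u a * npaths (A - {#(a,b)#}) b x"
proof -
  define B where "B = A - {#(a,b)#}"
  have acB: "acyclic (set_mset B)" unfolding B_def by (rule acyclic_sub[OF ac]) simp
  define T where "T = snd ` set_mset A"
  have finT: "finite T" unfolding T_def by simp
  have TA: "{c. (u,c) \<in># A} \<subseteq> T" for u unfolding T_def using snd_in by fast
  have TB: "{c. (u,c) \<in># B} \<subseteq> T" for u
  proof
    fix c assume "c \<in> {c. (u,c) \<in># B}"
    hence "(u,c) \<in># A - {#(a,b)#}" by (simp add: B_def)
    hence "(u,c) \<in># A" by (rule in_diffD)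
    thus "c \<in> T" unfolding T_def by (rule snd_in)
  qed
  have bT: "b \<in> T" unfolding T_def using ab by (rule snd_in)
  have cnt: "count A (u,c) = count B (u,c) + (if (u,c) = (a,b) then 1 else 0)" for u c
  proof -
    have "count A (a,b) \<ge> 1" using ab by simp
    thus ?thesis unfolding B_def by (simp add: count_diff)
  qed
  have PBba: "npaths B b a = 0"
  proof (rule ccontr)
    assume "npaths B b a \<noteq> 0"
    hence "(b,a) \<in> (set_mset B)\<^sup>*" by (rule npaths_pos_rtrancl)
    moreover have "set_mset B \<subseteq> set_mset A" unfolding B_def by (rule set_mset_mono) simp
    ultimately have "(b,a) \<in> (set_mset A)\<^sup>*" using rtrancl_mono by blast
    thus False using acyc_cycle[OF ac] ab by blast
  qed
  have split: "(\<Sum>c\<in>T. count A (u,c) * g c) = (\<Sum>c\<in>T. count B (u,c) * g c) + (if u = a then g b else 0)" for u g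
  proof -
    have "(\<Sum>c\<in>T. count A (u,c) * g c) = (\<Sum>c\<in>T. count B (u,c) * g c + (if c = b \<and> u = a then g c else 0))"
      by (rule sum.cong) (auto simp: cnt)
    also have "\<dots> = (\<Sum>c\<in>T. count B (u,c) * g c) + (\<Sum>c\<in>T. if c = b \<and> u = a then g c else 0)"
      by (rule sum.distrib)
    also have "(\<Sum>c\<in>T. if c = b \<and> u = a then g c else 0) = (if u = a then g b else 0)"
      using bT finT by (cases "u = a") (simp_all add: sum.delta)
    finally show ?thesis .
  qed
  have wfR: "wf ((set_mset A)\<inverse>)" by (rule finite_acyclic_wf_converse) (use ac in auto)
  show ?thesis unfolding B_def[symmetric]
  proof (induction u rule: wf_induct_rule[OF wfR])
    case (1 u)
    have IH: "count A (u,c) * npaths A c x = count A (u,c) * (npaths B c x + npaths B c a * npaths B b x)" for c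
    proof (cases "(u,c) \<in># A")
      case True
      hence "((c,u) \<in> (set_mset A)\<inverse>)" by simp
      from 1[OF this] show ?thesis by simp
    next
      case False thus ?thesis by (simp add: not_in_iff)
    qed
    have "npaths A u x = (if u = x then 1 else 0) + (\<Sum>c\<in>T. count A (u,c) * npaths A c x)"
      by (rule npaths_fwd[OF ac finT TA])
    also have "(\<Sum>c\<in>T. count A (u,c) * npaths A c x)
       = (\<Sum>c\<in>T. count A (u,c) * npaths B c x) + (\<Sum>c\<in>T. count A (u,c) * npaths B c a) * npaths B b x"
    proof -
      have "(\<Sum>c\<in>T. count A (u,c) * npaths A c x) = (\<Sum>c\<in>T. count A (u,c) * npaths B c x + (count A (u,c) * npaths B c a) * npaths B b x)"
        by (rule sum.cong[OF refl]) (subst IH, simp add: algebra_simps)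
      thus ?thesis by (simp add: sum.distrib sum_distrib_right)
    qed
    also have "\<dots> = (\<Sum>c\<in>T. count B (u,c) * npaths B c x) + (if u = a then npaths B b x else 0)
         + ((\<Sum>c\<in>T. count B (u,c) * npaths B c a) + (if u = a then npaths B b a else 0)) * npaths B b x"
      by (simp only: split)
    finally have "npaths A u x = (if u = x then 1 else 0) + (\<Sum>c\<in>T. count B (u,c) * npaths B c x)
       + ((if u = a then 1 else 0) + (\<Sum>c\<in>T. count B (u,c) * npaths B c a)) * npaths B b x"
      using PBba by (simp add: algebra_simps)
    also have "\<dots> = npaths B u x + npaths B u a * npaths B b x"
      using npaths_fwd[OF acB finT TB, of u x] npaths_fwd[OF acB finT TB, of u a] by (simp only:)
    finally show ?case .
  qed
qed



lemma npaths_bwd_aux: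
  "\<forall>A. size (filter_mset (\<lambda>e. snd e = v) A) = k \<longrightarrow> acyclic (set_mset A) \<longrightarrow> finite T \<longrightarrow> {w. (w,v) \<in># A} \<subseteq> T
     \<longrightarrow> npaths A u v = (if u = v then 1 else 0) + (\<Sum>w\<in>T. count A (w,v) * npaths A u w)"
proof (induction k)
  case 0
  show ?case
  proof (intro allI impI)
    fix A assume k: "size (filter_mset (\<lambda>e. snd e = v) A) = 0" and ac: "acyclic (set_mset A)"
    have noin: "(w,v) \<notin># A" for w
    proof
      assume "(w,v) \<in># A" hence "(w,v) \<in># filter_mset (\<lambda>e. snd e = v) A" by simp
      moreover have "filter_mset (\<lambda>e. snd e = v) A = {#}" using k by simp
      ultimately show False by simp
    qed
    have S0: "(\<Sum>w\<in>T. count A (w,v) * npaths A u w) = 0" using noin by (simp add: not_in_iff)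
    have "npaths A u v = (if u = v then 1 else 0)"
    proof (cases "u = v")
      case True thus ?thesis using npaths_self[OF ac] by simp
    next
      case False
      have "npaths A u v = 0"
      proof (rule ccontr)
        assume "npaths A u v \<noteq> 0"
        hence "(u,v) \<in> (set_mset A)\<^sup>*" by (rule npaths_pos_rtrancl)
        hence "(u,v) \<in> (set_mset A)\<^sup>+" using False by (simp add: rtrancl_eq_or_trancl)
        then obtain w where "(w,v) \<in> set_mset A" using tranclD2 by metis
        thus False using noin by simp
      qed
      thus ?thesis using False by simp
    qed
    thus "npaths A u v = (if u = v then 1 else 0) + (\<Sum>w\<in>T. count A (w,v) * npaths A u w)" using S0 by simp
  qed
next
  case (Suc k)
  show ?case
  proof (intro allI impI)
    fix A assume k: "size (filter_mset (\<lambda>e. snd e = v) A) = Suc k" and ac: "acyclic (set_mset A)"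
      and finT: "finite T" and TA: "{w. (w,v) \<in># A} \<subseteq> T"
    have "filter_mset (\<lambda>e. snd e = v) A \<noteq> {#}"
    proof
      assume "filter_mset (\<lambda>e. snd e = v) A = {#}"
      hence "size (filter_mset (\<lambda>e. snd e = v) A) = 0" by (simp only: size_empty)
      thus False using k by simp
    qed
    then obtain e where e: "e \<in># filter_mset (\<lambda>e. snd e = v) A" by blast
    then obtain w0 where w0: "(w0,v) \<in># A" by (cases e) auto
    define B where "B = A - {#(w0,v)#}"
    have BA: "B \<subseteq># A" unfolding B_def by simp
    have acB: "acyclic (set_mset B)" by (rule acyclic_sub[OF ac BA])
    have "filter_mset (\<lambda>e. snd e = v) B = filter_mset (\<lambda>e. snd e = v) A - {#(w0,v)#}"
      unfolding B_def by (simp add: filter_diff_mset)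
    moreover have "(w0,v) \<in># filter_mset (\<lambda>e. snd e = v) A" using w0 by simp
    ultimately have kB: "size (filter_mset (\<lambda>e. snd e = v) B) = k" using k by (simp add: size_Diff_singleton)
    have TB: "{w. (w,v) \<in># B} \<subseteq> T"
    proof
      fix w assume "w \<in> {w. (w,v) \<in># B}"
      hence "(w,v) \<in># A - {#(w0,v)#}" by (simp add: B_def)
      hence "(w,v) \<in># A" by (rule in_diffD)
      thus "w \<in> T" using TA by blast
    qed
    have w0T: "w0 \<in> T" using TA w0 by blast
    have IH: "npaths B u v = (if u = v then 1 else 0) + (\<Sum>w\<in>T. count B (w,v) * npaths B u w)"
      using Suc.IH[rule_format, OF kB acB finT TB] .
    have arc: "npaths A u z = npaths B u z + npaths B u w0 * npaths B v z" for z
      using npaths_arc[OF ac w0] unfolding B_def by simp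
    have Bsub: "set_mset B \<subseteq> set_mset A" by (rule set_mset_mono[OF BA])
    have PBvw: "npaths B v w = 0" if "(w,v) \<in># A" for w
    proof (rule ccontr)
      assume "npaths B v w \<noteq> 0"
      hence "(v,w) \<in> (set_mset B)\<^sup>*" by (rule npaths_pos_rtrancl)
      hence "(v,w) \<in> (set_mset A)\<^sup>*" using rtrancl_mono[OF Bsub] by blast
      thus False using acyc_cycle[OF ac] that by blast
    qed
    have cnt: "count A (w,v) = count B (w,v) + (if w = w0 then 1 else 0)" for w
    proof -
      have "count A (w0,v) \<ge> 1" using w0 by simp
      thus ?thesis unfolding B_def by (simp add: count_diff)
    qed
    have "(\<Sum>w\<in>T. count A (w,v) * npaths A u w) = (\<Sum>w\<in>T. count A (w,v) * npaths B u w)"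
    proof (rule sum.cong[OF refl])
      fix w assume "w \<in> T"
      show "count A (w,v) * npaths A u w = count A (w,v) * npaths B u w"
      proof (cases "(w,v) \<in># A")
        case True thus ?thesis using arc[of w] PBvw[OF True] by simp
      next
        case False thus ?thesis by (simp add: not_in_iff)
      qed
    qed
    also have "\<dots> = (\<Sum>w\<in>T. count B (w,v) * npaths B u w + (if w = w0 then npaths B u w else 0))"
      by (rule sum.cong[OF refl]) (simp add: cnt algebra_simps)
    also have "\<dots> = (\<Sum>w\<in>T. count B (w,v) * npaths B u w) + npaths B u w0"
      using finT w0T by (simp add: sum.distrib sum.delta)
    finally have "(\<Sum>w\<in>T. count A (w,v) * npaths A u w) = (\<Sum>w\<in>T. count B (w,v) * npaths B u w) + npaths B u w0" .
    moreover have "npaths A u v = npaths B u v + npaths B u w0"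
      using arc[of v] npaths_self[OF acB, of v] by simp
    ultimately show "npaths A u v = (if u = v then 1 else 0) + (\<Sum>w\<in>T. count A (w,v) * npaths A u w)"
      using IH by simp
  qed
qed

lemma npaths_bwd:
  assumes "acyclic (set_mset A)" "finite T" "{w. (w,v) \<in># A} \<subseteq> T"
  shows "npaths A u v = (if u = v then 1 else 0) + (\<Sum>w\<in>T. count A (w,v) * npaths A u w)"
  using npaths_bwd_aux[rule_format, OF refl assms] .



definition ins :: "('a\<times>'a) multiset \<Rightarrow> 'a \<Rightarrow> 'a set" where "ins A v = {w. (w,v) \<in># A}"
definition outs :: "('a\<times>'a) multiset \<Rightarrow> 'a \<Rightarrow> 'a set" where "outs A v = {c. (v,c) \<in># A}"

lemma fin_ins: "finite (ins A v)"
  by (rule finite_subset[of _ "fst ` set_mset A"]) (use fst_in in \<open>auto simp: ins_def\<close>)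
lemma fin_outs: "finite (outs A v)"
  by (rule finite_subset[of _ "snd ` set_mset A"]) (use snd_in in \<open>auto simp: outs_def\<close>)

lemma cnt_one: "e \<in># M \<Longrightarrow> count M e \<le> 1 \<Longrightarrow> count M e = 1"
  using count_greater_zero_iff[of M e] by linarith

lemma size_card: "(\<forall>e. count M e \<le> 1) \<Longrightarrow> size M = card (set_mset M)"
proof -
  assume c: "\<forall>e. count M e \<le> 1"
  have "M = mset_set (set_mset M)"
  proof (rule multiset_eqI)
    fix e show "count M e = count (mset_set (set_mset M)) e"
      using c[rule_format, of e] cnt_one[of e M] by (cases "e \<in># M") (auto simp: count_mset_set not_in_iff)
  qed
  hence "size M = size (mset_set (set_mset M))" by simp
  thus ?thesis by simp
qed

lemma indeg_card: assumes "\<forall>e. count A e \<le> 1" shows "indeg A v = card (ins A v)"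
proof -
  have c: "\<forall>e. count (filter_mset (\<lambda>(x,y). y = v) A) e \<le> 1" using assms by simp
  have s: "set_mset (filter_mset (\<lambda>(x,y). y = v) A) = (\<lambda>w. (w,v)) ` ins A v"
    by (auto simp: ins_def)
  have "indeg A v = card ((\<lambda>w. (w,v)) ` ins A v)" unfolding indeg_def size_card[OF c] s ..
  also have "\<dots> = card (ins A v)" by (rule card_image) (auto simp: inj_on_def)
  finally show ?thesis .
qed

lemma outdeg_card: assumes "\<forall>e. count A e \<le> 1" shows "outdeg A v = card (outs A v)"
proof -
  have c: "\<forall>e. count (filter_mset (\<lambda>(x,y). x = v) A) e \<le> 1" using assms by simp
  have s: "set_mset (filter_mset (\<lambda>(x,y). x = v) A) = (\<lambda>w. (v,w)) ` outs A v"
    by (auto simp: outs_def)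
  have "outdeg A v = card ((\<lambda>w. (v,w)) ` outs A v)" unfolding outdeg_def size_card[OF c] s ..
  also have "\<dots> = card (outs A v)" by (rule card_image) (auto simp: inj_on_def)
  finally show ?thesis .
qed

lemma npaths_fwdN:
  assumes ac: "acyclic (set_mset A)" and c1: "\<forall>e. count A e \<le> 1"
  shows "npaths A u x = (if u = x then 1 else 0) + (\<Sum>c\<in>outs A u. npaths A c x)"
proof -
  have "(\<Sum>c\<in>{c. (u,c) \<in># A}. count A (u,c) * npaths A c x) = (\<Sum>c\<in>outs A u. npaths A c x)"
  proof (rule sum.cong)
    fix c assume "c \<in> outs A u"
    hence "(u,c) \<in># A" by (simp add: outs_def)
    hence "count A (u,c) = 1" using cnt_one c1 by metis
    thus "count A (u,c) * npaths A c x = npaths A c x" by simp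
  qed (simp add: outs_def)
  thus ?thesis using npaths_fwd0[OF ac, of u x] by linarith
qed

lemma npaths_bwdN:
  assumes ac: "acyclic (set_mset A)" and c1: "\<forall>e. count A e \<le> 1"
  shows "npaths A u x = (if u = x then 1 else 0) + (\<Sum>w\<in>ins A x. npaths A u w)"
proof -
  have "(\<Sum>w\<in>ins A x. count A (w,x) * npaths A u w) = (\<Sum>w\<in>ins A x. npaths A u w)"
  proof (rule sum.cong[OF refl])
    fix w assume "w \<in> ins A x"
    hence "(w,x) \<in># A" by (simp add: ins_def)
    hence "count A (w,x) = 1" using cnt_one c1 by metis
    thus "count A (w,x) * npaths A u w = npaths A u w" by simp
  qed
  moreover have "npaths A u x = (if u = x then 1 else 0) + (\<Sum>w\<in>ins A x. count A (w,x) * npaths A u w)"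
    by (rule npaths_bwd[OF ac fin_ins]) (simp add: ins_def)
  ultimately show ?thesis by linarith
qed

lemma npaths_noout: "acyclic (set_mset A) \<Longrightarrow> outs A u = {} \<Longrightarrow> npaths A u x = (if u = x then 1 else 0)"
proof -
  assume ac: "acyclic (set_mset A)" and o: "outs A u = {}"
  have "(\<Sum>c\<in>{c. (u,c) \<in># A}. count A (u,c) * npaths A c x) = 0" using o by (simp add: outs_def)
  thus ?thesis using npaths_fwd0[OF ac, of u x] by linarith
qed

lemma npaths_noin: "acyclic (set_mset A) \<Longrightarrow> ins A x = {} \<Longrightarrow> npaths A u x = (if u = x then 1 else 0)"
proof -
  assume ac: "acyclic (set_mset A)" and o: "ins A x = {}"
  show ?thesis
  proof (cases "u = x")
    case True thus ?thesis using npaths_self[OF ac] by simp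
  next
    case False
    have "npaths A u x = 0"
    proof (rule ccontr)
      assume "npaths A u x \<noteq> 0"
      hence "(u,x) \<in> (set_mset A)\<^sup>*" by (rule npaths_pos_rtrancl)
      hence "(u,x) \<in> (set_mset A)\<^sup>+" using False by (simp add: rtrancl_eq_or_trancl)
      then obtain w where "(w,x) \<in> set_mset A" using tranclD2 by metis
      thus False using o by (simp add: ins_def)
    qed
    thus ?thesis using False by simp
  qed
qed



locale netw =
  fixes n :: nat and X :: "nat set" and V :: "'v pnode set" and A :: "('v pnode \<times> 'v pnode) multiset"
  assumes net: "is_network n X (V,A)"
begin

lemma finV: "finite V" using net by (simp add: is_network_def Let_def)
lemma Xsub: "X \<subseteq> {1..n}" using net by (simp add: is_network_def Let_def)
lemma arcV: "(u,v) \<in># A \<Longrightarrow> u \<in> V \<and> v \<in> V" using net by (auto simp: is_network_def Let_def)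
lemma c1: "\<forall>e. count A e \<le> 1" using net by (simp add: is_network_def Let_def)
lemma ac: "acyclic (set_mset A)" using net by (simp add: is_network_def Let_def)
lemma rootex: "\<exists>!r. r \<in> V \<and> indeg A r = 0" using net by (simp add: is_network_def Let_def)
lemma types: "v \<in> V \<Longrightarrow> is_root_node (V,A) v \<or> is_leaf_node (V,A) v \<or> is_tree_node (V,A) v \<or> is_ret_node (V,A) v"
  using net by (simp add: is_network_def Let_def)
lemma leaves: "{v \<in> V. is_leaf_node (V,A) v} = Leaf ` X" using net by (simp add: is_network_def Let_def)
lemma leafV: "V \<inter> range Leaf = Leaf ` X" using net by (simp add: is_network_def Let_def)

lemma indegc: "indeg A v = card (ins A v)" by (rule indeg_card[OF c1])
lemma outdegc: "outdeg A v = card (outs A v)" by (rule outdeg_card[OF c1])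

lemma fwd: "npaths A u x = (if u = x then 1 else 0) + (\<Sum>c\<in>outs A u. npaths A c x)"
  by (rule npaths_fwdN[OF ac c1])
lemma bwd: "npaths A u x = (if u = x then 1 else 0) + (\<Sum>w\<in>ins A x. npaths A u w)"
  by (rule npaths_bwdN[OF ac c1])

lemma leaf_iff: "is_leaf_node (V,A) v \<longleftrightarrow> v \<in> V \<and> (\<exists>p. ins A v = {p}) \<and> outs A v = {}"
  by (simp add: is_leaf_node_def indegc outdegc card_1_singleton_iff fin_outs)
lemma tree_iff: "is_tree_node (V,A) v \<longleftrightarrow> v \<in> V \<and> (\<exists>p. ins A v = {p}) \<and> (\<exists>a b. outs A v = {a,b} \<and> a \<noteq> b)"
  by (simp add: is_tree_node_def indegc outdegc card_1_singleton_iff card_2_iff)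
lemma ret_iff: "is_ret_node (V,A) v \<longleftrightarrow> v \<in> V \<and> (\<exists>p q. ins A v = {p,q} \<and> p \<noteq> q) \<and> (\<exists>c. outs A v = {c})"
  by (simp add: is_ret_node_def indegc outdegc card_1_singleton_iff card_2_iff)
lemma root_iff: "is_root_node (V,A) v \<longleftrightarrow> v \<in> V \<and> ins A v = {} \<and> (\<exists>c. outs A v = {c})"
  by (simp add: is_root_node_def indegc outdegc card_1_singleton_iff fin_ins)

lemma leaf_Leaf: "is_leaf_node (V,A) v \<longleftrightarrow> v \<in> Leaf ` X"
proof -
  have "v \<in> {v \<in> V. is_leaf_node (V,A) v} \<longleftrightarrow> v \<in> Leaf ` X" using leaves by simp
  moreover have "is_leaf_node (V,A) v \<Longrightarrow> v \<in> V" by (simp add: is_leaf_node_def)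
  ultimately show ?thesis by blast
qed
lemma Leaf_in: "Leaf k \<in> V \<longleftrightarrow> k \<in> X"
proof -
  have "Leaf k \<in> V \<longleftrightarrow> Leaf k \<in> V \<inter> range Leaf" by simp
  also have "\<dots> \<longleftrightarrow> Leaf k \<in> (Leaf ` X :: 'v pnode set)" by (simp only: leafV)
  also have "\<dots> \<longleftrightarrow> k \<in> X" by (auto simp: image_iff)
  finally show ?thesis .
qed


lemma VH_eq: "V_H (V,A) = {v \<in> V. is_ret_node (V,A) v}" by (simp add: V_H_def)
lemma VT_eq: "V_T (V,A) = {v \<in> V. is_leaf_node (V,A) v \<or> is_tree_node (V,A) v}" by (simp add: V_T_def)
lemma finVH: "finite (V_H (V,A))" using finV by (simp add: VH_eq)
lemma finVT: "finite (V_T (V,A))" using finV by (simp add: VT_eq)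

lemma mu0: "mu_vec n (V,A) u 0 = (\<Sum>h\<in>V_H (V,A). npaths A u h)" by (simp add: mu_vec_def)
lemma muk: "k \<noteq> 0 \<Longrightarrow> mu_vec n (V,A) u k = (if k \<in> X then npaths A u (Leaf k) else 0)"
  using Xsub by (auto simp: mu_vec_def Leaf_in)

definition own :: "'v pnode \<Rightarrow> nat \<Rightarrow> nat" where
  "own u k = (if k = 0 then (if u \<in> V_H (V,A) then 1 else 0) else if k \<in> X then (if u = Leaf k then 1 else 0) else 0)"

lemma mu_rec: "mu_vec n (V,A) u k = own u k + (\<Sum>c\<in>outs A u. mu_vec n (V,A) c k)"
proof (cases "k = 0")
  case True
  have "(\<Sum>h\<in>V_H (V,A). npaths A u h) = (\<Sum>h\<in>V_H (V,A). (if u = h then 1 else 0) + (\<Sum>c\<in>outs A u. npaths A c h))"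
    by (rule sum.cong[OF refl]) (rule fwd)
  also have "\<dots> = (\<Sum>h\<in>V_H (V,A). (if u = h then 1 else 0)) + (\<Sum>h\<in>V_H (V,A). \<Sum>c\<in>outs A u. npaths A c h)"
    by (rule sum.distrib)
  also have "(\<Sum>h\<in>V_H (V,A). (if u = h then 1 else 0)) = (if u \<in> V_H (V,A) then 1 else 0)"
    using finVH by (simp add: sum.delta)
  also have "(\<Sum>h\<in>V_H (V,A). \<Sum>c\<in>outs A u. npaths A c h) = (\<Sum>c\<in>outs A u. \<Sum>h\<in>V_H (V,A). npaths A c h)"
    by (rule sum.swap)
  finally show ?thesis using True by (simp add: mu0 own_def)
next
  case False
  show ?thesis
  proof (cases "k \<in> X")
    case True
    thus ?thesis using False fwd[of u "Leaf k"] by (simp add: muk own_def)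
  next
    case F2: False
    thus ?thesis using False by (simp add: muk own_def)
  qed
qed

lemma npaths_child_le: "c \<in> outs A u \<Longrightarrow> npaths A c x \<le> npaths A u x"
proof -
  assume c: "c \<in> outs A u"
  have "npaths A c x \<le> (\<Sum>c\<in>outs A u. npaths A c x)" by (rule member_le_sum) (use c fin_outs in auto)
  thus ?thesis using fwd[of u x] by linarith
qed

lemma mu_child_le: "c \<in> outs A u \<Longrightarrow> mu_vec n (V,A) c k \<le> mu_vec n (V,A) u k"
proof -
  assume c: "c \<in> outs A u"
  have "mu_vec n (V,A) c k \<le> (\<Sum>c\<in>outs A u. mu_vec n (V,A) c k)" by (rule member_le_sum) (use c fin_outs in auto)
  thus ?thesis using mu_rec[of u k] by linarith
qed

lemma own_le: "own u k \<le> mu_vec n (V,A) u k"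
  using mu_rec[of u k] by linarith

lemma outsV: "c \<in> outs A u \<Longrightarrow> c \<in> V" using arcV by (auto simp: outs_def)
lemma insV: "w \<in> ins A u \<Longrightarrow> w \<in> V" using arcV by (auto simp: ins_def)
lemma outs_ins: "c \<in> outs A u \<longleftrightarrow> u \<in> ins A c" by (simp add: outs_def ins_def)

lemma reach_leaf: "v \<in> V \<Longrightarrow> \<exists>k\<in>X. npaths A v (Leaf k) \<ge> 1"
proof -
  have wfR: "wf ((set_mset A)\<inverse>)" by (rule finite_acyclic_wf_converse) (use ac in auto)
  show "v \<in> V \<Longrightarrow> \<exists>k\<in>X. npaths A v (Leaf k) \<ge> 1"
  proof (induction v rule: wf_induct_rule[OF wfR])
    case (1 v)
    show ?case
    proof (cases "outs A v = {}")
      case True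
      have "\<not> is_root_node (V,A) v" "\<not> is_tree_node (V,A) v" "\<not> is_ret_node (V,A) v"
        using True by (auto simp: root_iff tree_iff ret_iff)
      hence "is_leaf_node (V,A) v" using types[OF 1(2)] by blast
      then obtain k where k: "k \<in> X" "v = Leaf k" using leaf_Leaf by blast
      have "npaths A v (Leaf k) = 1" using k npaths_self[OF ac] by simp
      thus ?thesis using k(1) by (intro bexI[where x=k]) simp_all
    next
      case False
      then obtain c where c: "c \<in> outs A v" by blast
      have "(c,v) \<in> (set_mset A)\<inverse>" using c by (simp add: outs_def)
      from 1(1)[OF this outsV[OF c]] obtain k where "k \<in> X" "npaths A c (Leaf k) \<ge> 1" by blast
      thus ?thesis using npaths_child_le[OF c, of "Leaf k"] by force
    qed
  qed
qed

lemma par_eq: "ins A v = {p} \<Longrightarrow> par A v = p"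
  unfolding par_def by (rule the_equality) (auto simp: ins_def)
lemma chld_eq: "outs A v = {c} \<Longrightarrow> chld A v = c"
  unfolding chld_def by (rule the_equality) (auto simp: outs_def)

end



context netw begin

lemma X0: "k \<in> X \<Longrightarrow> k \<noteq> 0" using Xsub by auto

lemma ret_not_tree: "is_ret_node (V,A) v \<Longrightarrow> \<not> is_tree_node (V,A) v"
  by (simp add: is_ret_node_def is_tree_node_def)
lemma ret_not_leaf: "is_ret_node (V,A) v \<Longrightarrow> \<not> is_leaf_node (V,A) v"
  by (simp add: is_ret_node_def is_leaf_node_def)
lemma tree_not_leaf: "is_tree_node (V,A) v \<Longrightarrow> \<not> is_leaf_node (V,A) v"
  by (simp add: is_tree_node_def is_leaf_node_def)
lemma root_not_leaf: "is_root_node (V,A) v \<Longrightarrow> \<not> is_leaf_node (V,A) v"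
  by (simp add: is_root_node_def is_leaf_node_def)

lemma own_tree: "is_tree_node (V,A) u \<Longrightarrow> own u k = 0"
proof -
  assume t: "is_tree_node (V,A) u"
  have "u \<notin> V_H (V,A)" using t ret_not_tree by (auto simp: VH_eq)
  moreover have "k \<in> X \<Longrightarrow> u \<noteq> Leaf k" using t tree_not_leaf leaf_Leaf by blast
  ultimately show ?thesis by (simp add: own_def)
qed

lemma own_ret: "is_ret_node (V,A) u \<Longrightarrow> own u k = (if k = 0 then 1 else 0)"
proof -
  assume t: "is_ret_node (V,A) u"
  have "u \<in> V_H (V,A)" using t by (auto simp: VH_eq is_ret_node_def)
  moreover have "k \<in> X \<Longrightarrow> u \<noteq> Leaf k" using t ret_not_leaf leaf_Leaf by blast
  ultimately show ?thesis by (simp add: own_def)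
qed

lemma own_leaf: "x \<in> X \<Longrightarrow> own (Leaf x) k = (if k = x then 1 else 0)"
proof -
  assume x: "x \<in> X"
  have l: "is_leaf_node (V,A) (Leaf x)" using x leaf_Leaf by blast
  have "Leaf x \<notin> V_H (V,A)" using l ret_not_leaf by (auto simp: VH_eq)
  thus ?thesis using x X0[OF x] by (auto simp: own_def)
qed

lemma leaf_outs: "is_leaf_node (V,A) v \<Longrightarrow> outs A v = {}" using leaf_iff by blast

lemma mu_leaf: "x \<in> X \<Longrightarrow> mu_vec n (V,A) (Leaf x) k = (if k = x then 1 else 0)"
proof -
  assume x: "x \<in> X"
  have "outs A (Leaf x) = {}" using leaf_outs leaf_Leaf x by blast
  thus ?thesis using mu_rec[of "Leaf x" k] own_leaf[OF x] by simp
qed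

lemma mu_tree: "is_tree_node (V,A) u \<Longrightarrow> outs A u = {a,b} \<Longrightarrow> a \<noteq> b \<Longrightarrow>
   mu_vec n (V,A) u k = mu_vec n (V,A) a k + mu_vec n (V,A) b k"
  using mu_rec[of u k] own_tree[of u k] by simp

lemma mu_ret: "is_ret_node (V,A) u \<Longrightarrow> outs A u = {c} \<Longrightarrow>
   mu_vec n (V,A) u k = (if k = 0 then 1 else 0) + mu_vec n (V,A) c k"
  using mu_rec[of u k] own_ret[of u k] by simp

lemma notroot: "w \<in> ins A v \<Longrightarrow> \<not> is_root_node (V,A) v"
  using root_iff by blast

lemma small1:
  assumes c: "c \<in> V" and sup: "\<forall>k\<in>X. k \<noteq> i \<and> k \<noteq> j \<longrightarrow> mu_vec n (V,A) c k = 0"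
  shows "mu_vec n (V,A) c i + mu_vec n (V,A) c j \<ge> 1"
proof -
  obtain k where k: "k \<in> X" "npaths A c (Leaf k) \<ge> 1" using reach_leaf[OF c] by blast
  have mk: "mu_vec n (V,A) c k \<ge> 1" using k X0[OF k(1)] by (simp add: muk)
  have "k = i \<or> k = j" using sup k(1) mk by auto
  thus ?thesis using mk by auto
qed

lemma small2:
  assumes c: "c \<in> V" and sup: "\<forall>k\<in>X. k \<noteq> i \<and> k \<noteq> j \<longrightarrow> mu_vec n (V,A) c k = 0"
    and t: "is_tree_node (V,A) c"
  shows "mu_vec n (V,A) c i + mu_vec n (V,A) c j \<ge> 2"
proof -
  obtain a b where ab: "outs A c = {a,b}" "a \<noteq> b" using t tree_iff by blast
  have aV: "a \<in> V" and bV: "b \<in> V" using ab outsV by auto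
  have supa: "\<forall>k\<in>X. k \<noteq> i \<and> k \<noteq> j \<longrightarrow> mu_vec n (V,A) a k = 0"
  proof (intro ballI impI)
    fix k assume "k \<in> X" "k \<noteq> i \<and> k \<noteq> j"
    hence "mu_vec n (V,A) c k = 0" using sup by blast
    moreover have "a \<in> outs A c" using ab by simp
    ultimately show "mu_vec n (V,A) a k = 0" using mu_child_le[of a c k] by simp
  qed
  have supb: "\<forall>k\<in>X. k \<noteq> i \<and> k \<noteq> j \<longrightarrow> mu_vec n (V,A) b k = 0"
  proof (intro ballI impI)
    fix k assume "k \<in> X" "k \<noteq> i \<and> k \<noteq> j"
    hence "mu_vec n (V,A) c k = 0" using sup by blast
    moreover have "b \<in> outs A c" using ab by simp
    ultimately show "mu_vec n (V,A) b k = 0" using mu_child_le[of b c k] by simp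
  qed
  have "mu_vec n (V,A) a i + mu_vec n (V,A) a j \<ge> 1" by (rule small1[OF aV supa])
  moreover have "mu_vec n (V,A) b i + mu_vec n (V,A) b j \<ge> 1" by (rule small1[OF bV supb])
  ultimately show ?thesis using mu_tree[OF t ab, of i] mu_tree[OF t ab, of j] by linarith
qed

lemma kinds: "v \<in> V \<Longrightarrow> ins A v \<noteq> {} \<Longrightarrow> \<not> is_tree_node (V,A) v \<Longrightarrow> \<not> is_ret_node (V,A) v \<Longrightarrow> is_leaf_node (V,A) v"
  using types root_iff by blast

lemma VT_cases: "u \<in> V_T (V,A) \<Longrightarrow> u \<in> V \<and> (is_leaf_node (V,A) u \<or> is_tree_node (V,A) u)"
  by (simp add: VT_eq)

end



context netw begin

lemma child_leaf: "c \<in> outs A u \<Longrightarrow> \<not> is_tree_node (V,A) c \<Longrightarrow> \<not> is_ret_node (V,A) c \<Longrightarrow> \<exists>x\<in>X. c = Leaf x"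
proof -
  assume c: "c \<in> outs A u" "\<not> is_tree_node (V,A) c" "\<not> is_ret_node (V,A) c"
  have "ins A c \<noteq> {}" using c(1) outs_ins by blast
  hence "is_leaf_node (V,A) c" using kinds[OF outsV[OF c(1)]] c by blast
  thus ?thesis using leaf_Leaf by blast
qed

lemma notret_mu0: "is_ret_node (V,A) c \<Longrightarrow> mu_vec n (V,A) c 0 \<ge> 1"
  using own_le[of c 0] own_ret[of c 0] by simp

lemma S1:
  assumes u: "u \<in> V_T (V,A)" and mu: "mu_vec n (V,A) u = delta {i,j}" and ij: "i \<noteq> j" "i \<in> {1..n}" "j \<in> {1..n}"
  shows "is_tree_node (V,A) u \<and> outs A u = {Leaf i, Leaf j}"
proof -
  let ?m = "mu_vec n (V,A)"
  have du: "?m u k = (if k = i \<or> k = j then 1 else 0)" for k using fun_cong[OF mu, of k] by (simp add: delta_def)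
  have i0: "i \<noteq> 0" "j \<noteq> 0" using ij by auto
  have uV: "u \<in> V" and lt: "is_leaf_node (V,A) u \<or> is_tree_node (V,A) u" using VT_cases[OF u] by auto
  have t: "is_tree_node (V,A) u"
  proof (rule ccontr)
    assume "\<not> ?thesis" hence "is_leaf_node (V,A) u" using lt by simp
    then obtain x where x: "x \<in> X" "u = Leaf x" using leaf_Leaf by blast
    have "?m u i = 1" "?m u j = 1" using du by auto
    moreover have "?m u i = (if i = x then 1 else 0)" "?m u j = (if j = x then 1 else 0)"
      using mu_leaf[OF x(1)] x(2) by simp_all
    ultimately have "i = x" "j = x" by (metis one_neq_zero)+
    thus False using ij by simp
  qed
  obtain a b where ab: "outs A u = {a,b}" "a \<noteq> b" using t tree_iff by blast
  have mab: "?m u k = ?m a k + ?m b k" for k by (rule mu_tree[OF t ab])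
  have cV: "c \<in> V" if "c \<in> {a,b}" for c using that ab outsV by auto
  have cle: "?m c k \<le> ?m u k" if "c \<in> {a,b}" for c k using mu_child_le[of c u k] that ab by simp
  have sup: "\<forall>k\<in>X. k \<noteq> i \<and> k \<noteq> j \<longrightarrow> ?m c k = 0" if c: "c \<in> {a,b}" for c
  proof (intro ballI impI)
    fix k assume "k \<in> X" "k \<noteq> i \<and> k \<noteq> j"
    thus "?m c k = 0" using cle[OF c, of k] du[of k] by simp
  qed
  have ge1: "?m c i + ?m c j \<ge> 1" if c: "c \<in> {a,b}" for c by (rule small1[OF cV[OF c] sup[OF c]])
  have tot: "(?m a i + ?m a j) + (?m b i + ?m b j) = 2" using mab[of i] mab[of j] du[of i] du[of j] ij by simp
  have ga: "?m a i + ?m a j \<ge> 1" using ge1[of a] by simp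
  have gb: "?m b i + ?m b j \<ge> 1" using ge1[of b] by simp
  have eq1: "?m c i + ?m c j = 1" if c: "c \<in> {a,b}" for c
  proof -
    have "c = a \<or> c = b" using c by simp
    thus ?thesis
    proof
      assume e: "c = a" show ?thesis unfolding e using ga gb tot by linarith
    next
      assume e: "c = b" show ?thesis unfolding e using ga gb tot by linarith
    qed
  qed
  have lab: "\<exists>x\<in>X. c = Leaf x \<and> (x = i \<or> x = j)" if c: "c \<in> {a,b}" for c
  proof -
    have nt: "\<not> is_tree_node (V,A) c" using small2[OF cV[OF c] sup[OF c]] eq1[OF c] by linarith
    have m0: "?m c 0 = 0" using cle[OF c, of 0] du[of 0] i0 by simp
    have nr: "\<not> is_ret_node (V,A) c" using notret_mu0[of c] m0 by linarith
    obtain x where x: "x \<in> X" "c = Leaf x" using child_leaf[of c u] nt nr c ab by auto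
    have "?m c x = 1" using mu_leaf[OF x(1)] x(2) by simp
    hence "?m u x \<ge> 1" using cle[OF c, of x] by simp
    hence "x = i \<or> x = j" using du[of x] by (simp split: if_splits)
    thus ?thesis using x by blast
  qed
  obtain xa where xa: "xa \<in> X" "a = Leaf xa" "xa = i \<or> xa = j" using lab[of a] by auto
  obtain xb where xb: "xb \<in> X" "b = Leaf xb" "xb = i \<or> xb = j" using lab[of b] by auto
  have "xa \<noteq> xb" using ab(2) xa xb by auto
  hence "{a,b} = {Leaf i, Leaf j}" using xa xb by auto
  thus ?thesis using t ab by simp
qed

end


context netw begin

lemma S2key:
  assumes t: "is_tree_node (V,A) u" and du: "\<And>k. mu_vec n (V,A) u k = (if k = 0 \<or> k = i \<or> k = j then 1 else 0)"
    and ij: "i \<noteq> j" "i \<in> {1..n}" "j \<in> {1..n}"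
    and hb: "outs A u = {h,b}" "h \<noteq> b" and rh: "is_ret_node (V,A) h" and rb: "\<not> is_ret_node (V,A) b"
  shows "\<exists>x y. outs A h = {Leaf x} \<and> b = Leaf y \<and> ((x = i \<and> y = j) \<or> (x = j \<and> y = i))"
proof -
  let ?m = "mu_vec n (V,A)"
  have i0: "i \<noteq> 0" "j \<noteq> 0" using ij by auto
  have mab: "?m u k = ?m h k + ?m b k" for k by (rule mu_tree[OF t hb])
  have cV: "c \<in> V" if "c \<in> {h,b}" for c using that hb outsV by auto
  have cle: "?m c k \<le> ?m u k" if "c \<in> {h,b}" for c k using mu_child_le[of c u k] that hb by simp
  have sup: "\<forall>k\<in>X. k \<noteq> i \<and> k \<noteq> j \<longrightarrow> ?m c k = 0" if c: "c \<in> {h,b}" for c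
  proof (intro ballI impI)
    fix k assume "k \<in> X" "k \<noteq> i \<and> k \<noteq> j"
    thus "?m c k = 0" using cle[OF c, of k] du[of k] X0 by simp
  qed
  have ge1: "?m c i + ?m c j \<ge> 1" if c: "c \<in> {h,b}" for c by (rule small1[OF cV[OF c] sup[OF c]])
  have tot: "(?m h i + ?m h j) + (?m b i + ?m b j) = 2" using mab[of i] mab[of j] du[of i] du[of j] ij by simp
  have ga: "?m h i + ?m h j \<ge> 1" using ge1[of h] by simp
  have gb: "?m b i + ?m b j \<ge> 1" using ge1[of b] by simp
  have eh: "?m h i + ?m h j = 1" using ga gb tot by linarith
  have eb: "?m b i + ?m b j = 1" using ga gb tot by linarith
  have ntb: "\<not> is_tree_node (V,A) b" using small2[OF cV sup, of b] eb by auto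
  obtain y where y: "y \<in> X" "b = Leaf y" using child_leaf[of b u] ntb rb hb by auto
  have my: "?m b y = 1" using mu_leaf[OF y(1)] y(2) by simp
  hence "?m u y \<ge> 1" using cle[of b y] by simp
  hence yij: "y = i \<or> y = j" using du[of y] X0[OF y(1)] by (simp split: if_splits)
  obtain c where c: "outs A h = {c}" using rh ret_iff by blast
  have mh: "?m h k = (if k = 0 then 1 else 0) + ?m c k" for k by (rule mu_ret[OF rh c])
  have chc: "c \<in> outs A h" using c by simp
  have c0: "?m c 0 = 0" using mh[of 0] cle[of h 0] du[of 0] by simp
  have nrc: "\<not> is_ret_node (V,A) c" using notret_mu0[of c] c0 by linarith
  have ecc: "?m c i + ?m c j = 1" using mh[of i] mh[of j] eh i0 by simp
  have cVc: "c \<in> V" using outsV[OF chc] .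
  have supc: "\<forall>k\<in>X. k \<noteq> i \<and> k \<noteq> j \<longrightarrow> ?m c k = 0"
  proof (intro ballI impI)
    fix k assume "k \<in> X" "k \<noteq> i \<and> k \<noteq> j"
    hence "?m h k = 0" using sup[of h] by simp
    thus "?m c k = 0" using mh[of k] by simp
  qed
  have ntc: "\<not> is_tree_node (V,A) c" using small2[OF cVc supc] ecc by linarith
  obtain x where x: "x \<in> X" "c = Leaf x" using child_leaf[OF chc ntc nrc] by auto
  have mx: "?m c x = 1" using mu_leaf[OF x(1)] x(2) by simp
  have mhx: "?m h x \<ge> 1" using mh[of x] mx by simp
  hence "?m u x \<ge> 1" using cle[of h x] by simp
  hence xij: "x = i \<or> x = j" using du[of x] X0[OF x(1)] by (simp split: if_splits)
  have "?m u x = ?m h x + ?m b x" by (rule mab)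
  moreover have "?m b x = (if x = y then 1 else 0)" using mu_leaf[OF y(1)] y(2) by simp
  moreover have "?m u x \<le> 1" using du[of x] by simp
  ultimately have "x \<noteq> y" using mhx by (auto split: if_splits)
  hence "(x = i \<and> y = j) \<or> (x = j \<and> y = i)" using xij yij by auto
  thus ?thesis using c x y by blast
qed

lemma S2:
  assumes u: "u \<in> V_T (V,A)" and mu: "mu_vec n (V,A) u = delta {0,i,j}" and ij: "i \<noteq> j" "i \<in> {1..n}" "j \<in> {1..n}"
  shows "is_tree_node (V,A) u \<and> (\<exists>h. is_ret_node (V,A) h \<and>
     ((outs A u = {h, Leaf j} \<and> outs A h = {Leaf i}) \<or> (outs A u = {h, Leaf i} \<and> outs A h = {Leaf j})))"
proof -
  let ?m = "mu_vec n (V,A)"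
  have du: "?m u k = (if k = 0 \<or> k = i \<or> k = j then 1 else 0)" for k using fun_cong[OF mu, of k] by (simp add: delta_def)
  have i0: "i \<noteq> 0" "j \<noteq> 0" using ij by auto
  have lt: "is_leaf_node (V,A) u \<or> is_tree_node (V,A) u" using VT_cases[OF u] by auto
  have t: "is_tree_node (V,A) u"
  proof (rule ccontr)
    assume "\<not> ?thesis" hence "is_leaf_node (V,A) u" using lt by simp
    then obtain x where x: "x \<in> X" "u = Leaf x" using leaf_Leaf by blast
    have "?m u 0 = 1" using du by simp
    moreover have "?m u 0 = 0" using mu_leaf[OF x(1), of 0] x X0[OF x(1)] by simp
    ultimately show False by simp
  qed
  obtain a b where ab: "outs A u = {a,b}" "a \<noteq> b" using t tree_iff by blast
  have mab: "?m u k = ?m a k + ?m b k" for k by (rule mu_tree[OF t ab])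
  have z: "?m a 0 + ?m b 0 = 1" using mab[of 0] du[of 0] by simp
  have cV: "c \<in> V" if "c \<in> {a,b}" for c using that ab outsV by auto
  have cle: "?m c k \<le> ?m u k" if "c \<in> {a,b}" for c k using mu_child_le[of c u k] that ab by simp
  have sup: "\<forall>k\<in>X. k \<noteq> i \<and> k \<noteq> j \<longrightarrow> ?m c k = 0" if c: "c \<in> {a,b}" for c
  proof (intro ballI impI)
    fix k assume "k \<in> X" "k \<noteq> i \<and> k \<noteq> j"
    thus "?m c k = 0" using cle[OF c, of k] du[of k] X0 by simp
  qed
  have ge1: "?m c i + ?m c j \<ge> 1" if c: "c \<in> {a,b}" for c by (rule small1[OF cV[OF c] sup[OF c]])
  have tot: "(?m a i + ?m a j) + (?m b i + ?m b j) = 2" using mab[of i] mab[of j] du[of i] du[of j] ij by simp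
  have ga: "?m a i + ?m a j \<ge> 1" using ge1[of a] by simp
  have gb: "?m b i + ?m b j \<ge> 1" using ge1[of b] by simp
  have nta: "\<not> is_tree_node (V,A) a" using small2[OF cV sup, of a] ga gb tot by auto
  have ntb: "\<not> is_tree_node (V,A) b" using small2[OF cV sup, of b] ga gb tot by auto
  have l0: "?m c 0 = 0" if c: "c \<in> {a,b}" and nt: "\<not> is_tree_node (V,A) c" and nr: "\<not> is_ret_node (V,A) c" for c
  proof -
    obtain x where x: "x \<in> X" "c = Leaf x" using child_leaf[of c u] nt nr c ab by auto
    show ?thesis using mu_leaf[OF x(1), of 0] x(2) X0[OF x(1)] by simp
  qed
  have "(is_ret_node (V,A) a \<and> \<not> is_ret_node (V,A) b) \<or> (is_ret_node (V,A) b \<and> \<not> is_ret_node (V,A) a)"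
  proof (cases "is_ret_node (V,A) a")
    case True
    have "\<not> is_ret_node (V,A) b"
    proof
      assume "is_ret_node (V,A) b"
      thus False using notret_mu0[of a] notret_mu0[of b] True z by linarith
    qed
    thus ?thesis using True by simp
  next
    case False
    have "is_ret_node (V,A) b"
    proof (rule ccontr)
      assume "\<not> is_ret_node (V,A) b"
      thus False using l0[of a] l0[of b] False nta ntb z by simp
    qed
    thus ?thesis using False by simp
  qed
  thus ?thesis
  proof
    assume r: "is_ret_node (V,A) a \<and> \<not> is_ret_node (V,A) b"
    obtain x y where xy: "outs A a = {Leaf x}" "b = Leaf y" "(x = i \<and> y = j) \<or> (x = j \<and> y = i)"
      using S2key[OF t du ij ab] r by blast
    thus ?thesis using t r ab by blast
  next
    assume r: "is_ret_node (V,A) b \<and> \<not> is_ret_node (V,A) a"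
    have ab': "outs A u = {b,a}" "b \<noteq> a" using ab by auto
    obtain x y where xy: "outs A b = {Leaf x}" "a = Leaf y" "(x = i \<and> y = j) \<or> (x = j \<and> y = i)"
      using S2key[OF t du ij ab'] r by blast
    thus ?thesis using t r ab' by blast
  qed
qed

end


context netw begin

lemma in_M: "\<mu> \<in># mu_net n (V,A) \<longleftrightarrow> (\<exists>u\<in>V_T (V,A). \<mu> = mu_vec n (V,A) u)"
  using finVT by (auto simp: mu_net_def)

lemma count_M: "count (mu_net n (V,A)) \<mu> = card {u\<in>V_T (V,A). mu_vec n (V,A) u = \<mu>}"
proof -
  have "count (mu_net n (V,A)) \<mu> = sum (count (mset_set (V_T (V,A)))) (mu_vec n (V,A) -` {\<mu>} \<inter> V_T (V,A))"
    unfolding mu_net_def count_image_mset using finVT by simp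
  also have "\<dots> = sum (\<lambda>_. 1) (mu_vec n (V,A) -` {\<mu>} \<inter> V_T (V,A))"
    by (rule sum.cong[OF refl]) (use finVT in \<open>simp add: count_mset_set\<close>)
  also have "\<dots> = card {u\<in>V_T (V,A). mu_vec n (V,A) u = \<mu>}"
    by (simp add: Int_commute vimage_def Collect_conj_eq)
  finally show ?thesis .
qed

lemma leafV2: "is_leaf_node (V,A) v \<Longrightarrow> v \<in> V" by (simp add: is_leaf_node_def)

lemma leaf_ins: "is_leaf_node (V,A) v \<Longrightarrow> ins A v = {par A v}"
proof -
  assume "is_leaf_node (V,A) v"
  then obtain p where "ins A v = {p}" using leaf_iff by blast
  thus ?thesis using par_eq by simp
qed

lemma in_outs_V: "Leaf x \<in> outs A u \<Longrightarrow> x \<in> X" using outsV Leaf_in by blast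

lemma Leaf_ins: "x \<in> X \<Longrightarrow> ins A (Leaf x) = {par A (Leaf x)}"
  using leaf_ins leaf_Leaf by blast

lemma tree_VT: "is_tree_node (V,A) u \<Longrightarrow> u \<in> V_T (V,A)" by (simp add: VT_eq is_tree_node_def)
lemma leaf_VT: "x \<in> X \<Longrightarrow> Leaf x \<in> V_T (V,A)" using leaf_Leaf by (simp add: VT_eq is_leaf_node_def) blast

lemma mu_leaf_fun: "x \<in> X \<Longrightarrow> mu_vec n (V,A) (Leaf x) = delta {x}"
  by (rule ext) (simp add: mu_leaf delta_def)

lemma ms_cherry_net:
  assumes ms: "ms_cherry n (mu_net n (V,A)) (i,j)"
  shows "net_cherry (V,A) (i,j)"
proof -
  have ij: "i \<noteq> j" "i \<in> {1..n}" "j \<in> {1..n}" and c: "count (mu_net n (V,A)) (delta {i,j}) = 1"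
    using ms by (auto simp: ms_cherry_def)
  have "delta {i,j} \<in># mu_net n (V,A)" using c by (simp add: count_greater_zero_iff[symmetric])
  then obtain u where u: "u \<in> V_T (V,A)" "mu_vec n (V,A) u = delta {i,j}" using in_M by metis
  have o: "outs A u = {Leaf i, Leaf j}" using S1[OF u ij] by simp
  have x: "i \<in> X" "j \<in> X" using in_outs_V o by auto
  have "u \<in> ins A (Leaf i)" "u \<in> ins A (Leaf j)" using o outs_ins by auto
  hence "par A (Leaf i) = u" "par A (Leaf j) = u" using Leaf_ins x by auto
  moreover have "is_leaf_node (V,A) (Leaf i)" "is_leaf_node (V,A) (Leaf j)" using x leaf_Leaf by auto
  ultimately show ?thesis using ij by (simp add: net_cherry_def)
qed

end


context netw begin

definition rt :: "'v pnode" where "rt = (THE r. r \<in> V \<and> indeg A r = 0)"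

lemma rt: "rt \<in> V" "ins A rt = {}"
proof -
  have "rt \<in> V \<and> indeg A rt = 0" unfolding rt_def by (rule theI'[OF rootex])
  thus "rt \<in> V" by simp
  have "card (ins A rt) = 0" using \<open>rt \<in> V \<and> indeg A rt = 0\<close> indegc by simp
  thus "ins A rt = {}" using fin_ins[of A rt] by simp
qed

lemma rt_unique: "v \<in> V \<Longrightarrow> ins A v = {} \<Longrightarrow> v = rt"
proof -
  assume v: "v \<in> V" "ins A v = {}"
  have "indeg A v = 0" "indeg A rt = 0" using v rt indegc by auto
  thus ?thesis using rootex v(1) rt(1) by blast
qed

lemma reach_rt: "v \<in> V \<Longrightarrow> (rt, v) \<in> (set_mset A)\<^sup>*"
proof -
  have wfR: "wf (set_mset A)" by (rule finite_acyclic_wf) (use ac in auto)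
  show "v \<in> V \<Longrightarrow> (rt, v) \<in> (set_mset A)\<^sup>*"
  proof (induction v rule: wf_induct_rule[OF wfR])
    case (1 v)
    show ?case
    proof (cases "ins A v = {}")
      case True thus ?thesis using rt_unique[OF 1(2)] by simp
    next
      case False
      then obtain w where w: "w \<in> ins A v" by blast
      have wv: "(w,v) \<in> set_mset A" using w by (simp add: ins_def)
      have "(rt, w) \<in> (set_mset A)\<^sup>*" using 1(1)[OF wv insV[OF w]] .
      thus ?thesis using wv by simp
    qed
  qed
qed

lemma rt_root: "is_root_node (V,A) rt"
proof -
  have "\<not> is_leaf_node (V,A) rt" "\<not> is_tree_node (V,A) rt" "\<not> is_ret_node (V,A) rt"
    using rt(2) by (auto simp: leaf_iff tree_iff ret_iff)
  thus ?thesis using types[OF rt(1)] by blast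
qed

definition rc :: "'v pnode" where "rc = (THE c. outs A rt = {c})"

lemma rc: "outs A rt = {rc}"
proof -
  obtain c where c: "outs A rt = {c}" using rt_root root_iff by blast
  have "rc = c" unfolding rc_def using c by simp
  thus ?thesis using c by simp
qed

lemma reach_rc: "v \<in> V \<Longrightarrow> v \<noteq> rt \<Longrightarrow> (rc, v) \<in> (set_mset A)\<^sup>*"
proof -
  assume v: "v \<in> V" "v \<noteq> rt"
  have "(rt, v) \<in> (set_mset A)\<^sup>+" using reach_rt[OF v(1)] v(2) by (simp add: rtrancl_eq_or_trancl)
  then obtain y where y: "(rt,y) \<in> set_mset A" "(y,v) \<in> (set_mset A)\<^sup>*" using tranclD by metis
  have "y = rc" using y(1) rc by (auto simp: outs_def)
  thus ?thesis using y by simp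
qed

lemma rc_V: "rc \<in> V" using rc outsV by auto

lemma rc_not_ret: "\<not> is_ret_node (V,A) rc"
proof
  assume "is_ret_node (V,A) rc"
  then obtain p q where pq: "ins A rc = {p,q}" "p \<noteq> q" using ret_iff by blast
  obtain z where z: "z \<in> ins A rc" "z \<noteq> rt" using pq by auto
  have "(rc, z) \<in> (set_mset A)\<^sup>*" using reach_rc[OF insV[OF z(1)] z(2)] .
  moreover have "(z, rc) \<in> set_mset A" using z by (simp add: ins_def)
  ultimately show False using acyc_cycle[OF ac] by blast
qed

lemma rc_not_root: "\<not> is_root_node (V,A) rc"
  using notroot[of rt rc] rc outs_ins by blast

end


context netw begin

lemma muVH_ge: "h \<in> V_H (V,A) \<Longrightarrow> npaths A u h \<le> mu_vec n (V,A) u 0"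
  unfolding mu0 by (rule member_le_sum) (use finVH in auto)

lemma ret_VH: "is_ret_node (V,A) h \<Longrightarrow> h \<in> V_H (V,A)" by (simp add: VH_eq is_ret_node_def)

lemma ms_ret_net:
  assumes ms: "ms_ret_cherry n (mu_net n (V,A)) (i,j)"
  shows "net_ret_cherry (V,A) (i,j)"
proof -
  let ?m = "mu_vec n (V,A)"
  have ij: "i \<noteq> j" "i \<in> {1..n}" "j \<in> {1..n}" and c: "count (mu_net n (V,A)) (delta {0,i,j}) = 1"
    and cond: "\<forall>\<mu>\<in>#mu_net n (V,A). \<mu> \<noteq> delta {i} \<and> \<mu> \<noteq> delta {j} \<longrightarrow> \<mu> i \<le> \<mu> 0 \<and> \<mu> j \<le> \<mu> i"
    using ms by (auto simp: ms_ret_cherry_def)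
  have "delta {0,i,j} \<in># mu_net n (V,A)" using c by (simp add: count_greater_zero_iff[symmetric])
  then obtain u where u: "u \<in> V_T (V,A)" "?m u = delta {0,i,j}" using in_M by metis
  obtain h where t: "is_tree_node (V,A) u" and rh: "is_ret_node (V,A) h"
    and cases: "(outs A u = {h, Leaf j} \<and> outs A h = {Leaf i}) \<or> (outs A u = {h, Leaf i} \<and> outs A h = {Leaf j})"
    using S2[OF u ij] by blast
  show ?thesis using cases
  proof
    assume o: "outs A u = {h, Leaf j} \<and> outs A h = {Leaf i}"
    have x: "i \<in> X" "j \<in> X" using in_outs_V o by auto
    have "h \<in> ins A (Leaf i)" "u \<in> ins A (Leaf j)" "u \<in> ins A h" using o outs_ins by auto
    hence p: "par A (Leaf i) = h" "par A (Leaf j) = u"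
      using Leaf_ins[OF x(1)] Leaf_ins[OF x(2)] by auto
    have "(u,h) \<in># A" using \<open>u \<in> ins A h\<close> unfolding ins_def by simp
    note p = p this
    moreover have "is_leaf_node (V,A) (Leaf i)" "is_leaf_node (V,A) (Leaf j)" using x leaf_Leaf by auto
    ultimately show ?thesis using ij rh t by (simp add: net_ret_cherry_def)
  next
    assume o: "outs A u = {h, Leaf i} \<and> outs A h = {Leaf j}"
    have x: "i \<in> X" "j \<in> X" using in_outs_V o by auto
    have "u \<in> ins A (Leaf i)" "h \<in> ins A (Leaf j)" "u \<in> ins A h" using o outs_ins by auto
    hence iLi: "ins A (Leaf i) = {u}" and iLj: "ins A (Leaf j) = {h}" using Leaf_ins x by auto
    obtain p q where pq: "ins A h = {p,q}" "p \<noteq> q" using rh ret_iff by blast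
    obtain q' where q': "ins A h = {u,q'}" "u \<noteq> q'"
      using pq \<open>u \<in> ins A h\<close> by auto
    have q'V: "q' \<in> V" using q' insV by auto
    have q'rt: "q' \<noteq> rt"
    proof
      assume "q' = rt"
      hence "h \<in> outs A rt" using q' outs_ins by auto
      hence "h = rc" using rc by simp
      thus False using rh rc_not_ret by simp
    qed
    let ?c = rc
    have cq: "(?c, q') \<in> (set_mset A)\<^sup>*" by (rule reach_rc[OF q'V q'rt])
    have qh: "(q', h) \<in> set_mset A" using q' by (auto simp: ins_def)
    have npq: "npaths A ?c q' \<ge> 1" by (rule npaths_reach[OF ac cq])
    have "(?c, h) \<in> (set_mset A)\<^sup>+" using cq qh by simp
    then obtain y where "(?c, y) \<in> set_mset A" using tranclD by metis
    hence "outs A ?c \<noteq> {}" by (auto simp: outs_def)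
    hence cnl: "\<not> is_leaf_node (V,A) ?c" using leaf_outs by blast
    have ct: "is_tree_node (V,A) ?c" using types[OF rc_V] cnl rc_not_ret rc_not_root by blast
    have cLi: "?c \<noteq> Leaf i" "?c \<noteq> Leaf j" "?c \<noteq> h"
      using cnl rh rc_not_ret x leaf_Leaf by auto
    have bLj: "npaths A ?c (Leaf j) = npaths A ?c h" using bwd[of ?c "Leaf j"] iLj cLi by simp
    have bh: "npaths A ?c h = npaths A ?c u + npaths A ?c q'" using bwd[of ?c h] q' cLi by simp
    have bLi: "npaths A ?c (Leaf i) = npaths A ?c u" using bwd[of ?c "Leaf i"] iLi cLi by simp
    have mi: "?m ?c i = npaths A ?c u" using bLi muk[of i ?c] x ij by simp
    have mj: "?m ?c j = npaths A ?c u + npaths A ?c q'" using bLj bh muk[of j ?c] x ij by simp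
    have m0: "?m ?c 0 \<ge> 1" using muVH_ge[OF ret_VH[OF rh], of ?c] bh npq by simp
    have cVT: "?c \<in> V_T (V,A)" by (rule tree_VT[OF ct])
    have inM: "?m ?c \<in># mu_net n (V,A)" using in_M cVT by blast
    have nd1: "?m ?c \<noteq> delta {i}"
    proof
      assume "?m ?c = delta {i}"
      hence "?m ?c j = 0" using ij by (simp add: delta_def)
      thus False using mj npq by simp
    qed
    have nd2: "?m ?c \<noteq> delta {j}"
    proof
      assume "?m ?c = delta {j}"
      hence "?m ?c 0 = 0" using ij by (simp add: delta_def)
      thus False using m0 by simp
    qed
    have "?m ?c j \<le> ?m ?c i" using cond inM nd1 nd2 by blast
    hence False using mi mj npq by simp
    thus ?thesis by simp
  qed
qed

end


lemma ms_excl: "ms_cherry n M (i,j) \<Longrightarrow> \<not> ms_ret_cherry n M (i,j)"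
proof
  assume c: "ms_cherry n M (i,j)" and r: "ms_ret_cherry n M (i,j)"
  have ij: "i \<noteq> j" "i \<in> {1..n}" "j \<in> {1..n}" using c by (auto simp: ms_cherry_def)
  have "count M (delta {i,j}) = 1" using c by (simp add: ms_cherry_def)
  hence m: "delta {i,j} \<in># M" by (simp add: count_greater_zero_iff[symmetric])
  have d1: "delta {i,j} \<noteq> delta {i}"
  proof
    assume "delta {i,j} = delta {i}" hence "delta {i,j} j = delta {i} j" by simp
    thus False using ij by (simp add: delta_def)
  qed
  have d2: "delta {i,j} \<noteq> delta {j}"
  proof
    assume "delta {i,j} = delta {j}" hence "delta {i,j} i = delta {j} i" by simp
    thus False using ij by (simp add: delta_def)
  qed
  have "delta {i,j} i \<le> delta {i,j} 0" using r m d1 d2 by (auto simp: ms_ret_cherry_def)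
  thus False using ij by (auto simp: delta_def)
qed

context netw begin

lemma Leaf_leaf_X: "is_leaf_node (V,A) (Leaf i) \<Longrightarrow> i \<in> X"
  using leaf_Leaf by auto

lemma cherry_struct:
  assumes nc: "net_cherry (V,A) (i,j)"
  defines "p \<equiv> par A (Leaf i)"
  shows "i \<in> X \<and> j \<in> X \<and> i \<noteq> j \<and> ins A (Leaf i) = {p} \<and> ins A (Leaf j) = {p} \<and> is_tree_node (V,A) p
     \<and> outs A p = {Leaf i, Leaf j}"
proof -
  have l: "is_leaf_node (V,A) (Leaf i)" "is_leaf_node (V,A) (Leaf j)" "i \<noteq> j" and pp: "par A (Leaf j) = p"
    using nc by (auto simp: net_cherry_def p_def)
  have x: "i \<in> X" "j \<in> X" using l Leaf_leaf_X by auto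
  have ii: "ins A (Leaf i) = {p}" "ins A (Leaf j) = {p}" using leaf_ins[OF l(1)] leaf_ins[OF l(2)] pp p_def by auto
  have pV: "p \<in> V" using ii insV by auto
  have o: "Leaf i \<in> outs A p" "Leaf j \<in> outs A p" using ii outs_ins by auto
  have "\<not> is_leaf_node (V,A) p" using o leaf_outs by blast
  moreover have "\<not> is_root_node (V,A) p" "\<not> is_ret_node (V,A) p" using o l(3) root_iff ret_iff by fastforce+
  ultimately have t: "is_tree_node (V,A) p" using types[OF pV] by blast
  then obtain a b where ab: "outs A p = {a,b}" "a \<noteq> b" using tree_iff by blast
  have "outs A p = {Leaf i, Leaf j}" using ab o l(3) by auto
  thus ?thesis using x l(3) ii t by simp
qed

lemma ret_struct:
  assumes nc: "net_ret_cherry (V,A) (i,j)"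
  defines "h \<equiv> par A (Leaf i)" and "g \<equiv> par A (Leaf j)"
  shows "i \<in> X \<and> j \<in> X \<and> i \<noteq> j \<and> ins A (Leaf i) = {h} \<and> ins A (Leaf j) = {g} \<and> is_ret_node (V,A) h
     \<and> is_tree_node (V,A) g \<and> outs A h = {Leaf i} \<and> outs A g = {h, Leaf j} \<and> (g,h) \<in># A \<and> h \<noteq> Leaf j \<and> g \<noteq> h"
proof -
  have l: "is_leaf_node (V,A) (Leaf i)" "is_leaf_node (V,A) (Leaf j)" "i \<noteq> j"
    and rh: "is_ret_node (V,A) h" and tg: "is_tree_node (V,A) g" and gh: "(g,h) \<in># A"
    using nc by (auto simp: net_ret_cherry_def h_def g_def)
  have x: "i \<in> X" "j \<in> X" using l Leaf_leaf_X by auto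
  have ii: "ins A (Leaf i) = {h}" "ins A (Leaf j) = {g}" using leaf_ins[OF l(1)] leaf_ins[OF l(2)] h_def g_def by auto
  have oh: "Leaf i \<in> outs A h" "Leaf j \<in> outs A g" "h \<in> outs A g"
    using ii gh outs_ins by (auto simp: outs_def)
  obtain c where c: "outs A h = {c}" using rh ret_iff by blast
  have ohi: "outs A h = {Leaf i}" using c oh by auto
  have hLj: "h \<noteq> Leaf j" using rh l(2) ret_not_leaf by blast
  obtain a b where ab: "outs A g = {a,b}" "a \<noteq> b" using tg tree_iff by blast
  have og: "outs A g = {h, Leaf j}" using ab oh hLj by auto
  have "g \<noteq> h" using rh tg ret_not_tree by blast
  thus ?thesis using x l(3) ii rh tg ohi og gh hLj by simp
qed

end


context netw begin

lemma in_ins_le: "w \<in> ins A v \<Longrightarrow> npaths A u w \<le> npaths A u v"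
proof -
  assume w: "w \<in> ins A v"
  have "npaths A u w \<le> (\<Sum>w\<in>ins A v. npaths A u w)" by (rule member_le_sum) (use w fin_ins in auto)
  thus ?thesis using bwd[of u v] by linarith
qed

lemma cherry_ms:
  assumes nc: "net_cherry (V,A) (i,j)" and ij: "i \<in> {1..n}" "j \<in> {1..n}"
  shows "ms_cherry n (mu_net n (V,A)) (i,j)"
proof -
  let ?m = "mu_vec n (V,A)"
  define p where "p = par A (Leaf i)"
  have x: "i \<in> X" "j \<in> X" "i \<noteq> j" and iLi: "ins A (Leaf i) = {p}" and iLj: "ins A (Leaf j) = {p}"
    and tp: "is_tree_node (V,A) p" and op: "outs A p = {Leaf i, Leaf j}"
    using cherry_struct[OF nc] p_def by auto
  have mp: "?m p = delta {i,j}"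
  proof (rule ext)
    fix k show "?m p k = delta {i,j} k"
      using mu_tree[OF tp op, of k] mu_leaf[OF x(1), of k] mu_leaf[OF x(2), of k] x(3) by (simp add: delta_def)
  qed
  have setp: "{u\<in>V_T (V,A). ?m u = delta {i,j}} = {p}"
  proof (intro equalityI subsetI)
    fix u assume "u \<in> {u\<in>V_T (V,A). ?m u = delta {i,j}}"
    hence u: "u \<in> V_T (V,A)" "?m u = delta {i,j}" by auto
    hence "outs A u = {Leaf i, Leaf j}" using S1[OF u x(3) ij] by simp
    hence "u \<in> ins A (Leaf i)" using outs_ins by auto
    thus "u \<in> {p}" using iLi by simp
  next
    fix u assume "u \<in> {p}" thus "u \<in> {u\<in>V_T (V,A). ?m u = delta {i,j}}" using tree_VT[OF tp] mp by simp
  qed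
  have cnt: "count (mu_net n (V,A)) (delta {i,j}) = 1" using count_M setp by simp
  have cond: "\<forall>\<mu>\<in>#mu_net n (V,A). \<mu> \<noteq> delta {i} \<and> \<mu> \<noteq> delta {j} \<longrightarrow> \<mu> i = \<mu> j"
  proof (intro ballI impI)
    fix \<mu> assume mu: "\<mu> \<in># mu_net n (V,A)" and ne: "\<mu> \<noteq> delta {i} \<and> \<mu> \<noteq> delta {j}"
    then obtain u where u: "u \<in> V_T (V,A)" "\<mu> = ?m u" using in_M by blast
    have ui: "u \<noteq> Leaf i" using ne u mu_leaf_fun[OF x(1)] by auto
    have uj: "u \<noteq> Leaf j" using ne u mu_leaf_fun[OF x(2)] by auto
    have "?m u i = npaths A u (Leaf i)" using muk[of i u] x ij by simp
    also have "\<dots> = npaths A u p" using bwd[of u "Leaf i"] iLi ui by simp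
    also have "\<dots> = npaths A u (Leaf j)" using bwd[of u "Leaf j"] iLj uj by simp
    also have "\<dots> = ?m u j" using muk[of j u] x ij by simp
    finally show "\<mu> i = \<mu> j" using u by simp
  qed
  show ?thesis using x ij cnt cond by (simp add: ms_cherry_def)
qed

lemma ret_ms:
  assumes nc: "net_ret_cherry (V,A) (i,j)" and ij: "i \<in> {1..n}" "j \<in> {1..n}"
  shows "ms_ret_cherry n (mu_net n (V,A)) (i,j)"
proof -
  let ?m = "mu_vec n (V,A)"
  define h where "h = par A (Leaf i)"
  define g where "g = par A (Leaf j)"
  have x: "i \<in> X" "j \<in> X" "i \<noteq> j" and iLi: "ins A (Leaf i) = {h}" and iLj: "ins A (Leaf j) = {g}"
    and rh: "is_ret_node (V,A) h" and tg: "is_tree_node (V,A) g" and oh: "outs A h = {Leaf i}"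
    and og: "outs A g = {h, Leaf j}" and gh: "(g,h) \<in># A" and hLj: "h \<noteq> Leaf j" and gnh: "g \<noteq> h"
    using ret_struct[OF nc] h_def g_def by auto
  have i0: "i \<noteq> 0" "j \<noteq> 0" using ij by auto
  have mg: "?m g = delta {0,i,j}"
  proof (rule ext)
    fix k show "?m g k = delta {0,i,j} k"
      using mu_tree[OF tg og hLj, of k] mu_ret[OF rh oh, of k] mu_leaf[OF x(1), of k] mu_leaf[OF x(2), of k] x(3) i0
      by (simp add: delta_def)
  qed
  have setg: "{u\<in>V_T (V,A). ?m u = delta {0,i,j}} = {g}"
  proof (intro equalityI subsetI)
    fix u assume "u \<in> {u\<in>V_T (V,A). ?m u = delta {0,i,j}}"
    hence u: "u \<in> V_T (V,A)" "?m u = delta {0,i,j}" by auto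
    obtain h' where rh': "is_ret_node (V,A) h'"
      and cs: "(outs A u = {h', Leaf j} \<and> outs A h' = {Leaf i}) \<or> (outs A u = {h', Leaf i} \<and> outs A h' = {Leaf j})"
      using S2[OF u x(3) ij] by blast
    show "u \<in> {g}" using cs
    proof
      assume "outs A u = {h', Leaf j} \<and> outs A h' = {Leaf i}"
      hence "u \<in> ins A (Leaf j)" using outs_ins by auto
      thus ?thesis using iLj by simp
    next
      assume "outs A u = {h', Leaf i} \<and> outs A h' = {Leaf j}"
      hence "h' \<in> ins A (Leaf j)" using outs_ins by auto
      hence "h' = g" using iLj by simp
      hence False using rh' tg ret_not_tree by blast
      thus ?thesis by simp
    qed
  next
    fix u assume "u \<in> {g}" thus "u \<in> {u\<in>V_T (V,A). ?m u = delta {0,i,j}}" using tree_VT[OF tg] mg by simp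
  qed
  have cnt: "count (mu_net n (V,A)) (delta {0,i,j}) = 1" using count_M setg by simp
  have cond: "\<forall>\<mu>\<in>#mu_net n (V,A). \<mu> \<noteq> delta {i} \<and> \<mu> \<noteq> delta {j} \<longrightarrow> \<mu> i \<le> \<mu> 0 \<and> \<mu> j \<le> \<mu> i"
  proof (intro ballI impI)
    fix \<mu> assume mu: "\<mu> \<in># mu_net n (V,A)" and ne: "\<mu> \<noteq> delta {i} \<and> \<mu> \<noteq> delta {j}"
    then obtain u where u: "u \<in> V_T (V,A)" "\<mu> = ?m u" using in_M by blast
    have ui: "u \<noteq> Leaf i" using ne u mu_leaf_fun[OF x(1)] by auto
    have uj: "u \<noteq> Leaf j" using ne u mu_leaf_fun[OF x(2)] by auto
    have a: "?m u i = npaths A u h" using muk[of i u] x ij bwd[of u "Leaf i"] iLi ui by simp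
    have b: "?m u j = npaths A u g" using muk[of j u] x ij bwd[of u "Leaf j"] iLj uj by simp
    have c: "npaths A u h \<le> ?m u 0" by (rule muVH_ge[OF ret_VH[OF rh]])
    have d: "npaths A u g \<le> npaths A u h" by (rule in_ins_le) (use gh in \<open>simp add: ins_def\<close>)
    show "\<mu> i \<le> \<mu> 0 \<and> \<mu> j \<le> \<mu> i" using a b c d u by simp
  qed
  show ?thesis using x ij cnt cond by (simp add: ms_ret_cherry_def)
qed

lemma reducible_iff:
  assumes ij: "i \<in> {1..n}" "j \<in> {1..n}"
  shows "net_reducible (V,A) (i,j) \<longleftrightarrow> ms_reducible n (mu_net n (V,A)) (i,j)"
  using cherry_ms[OF _ ij] ret_ms[OF _ ij] ms_cherry_net ms_ret_net
  by (auto simp: net_reducible_def ms_reducible_def)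

end


definition touch :: "'a set \<Rightarrow> 'a \<times> 'a \<Rightarrow> bool" where "touch W e = (fst e \<in> W \<or> snd e \<in> W)"
definition rew :: "('a\<times>'a) multiset \<Rightarrow> 'a set \<Rightarrow> ('a\<times>'a) set \<Rightarrow> ('a\<times>'a) multiset" where
  "rew A W E = filter_mset (\<lambda>e. \<not> touch W e) A + mset_set E"

lemma acyclic_extend: "acyclic R \<Longrightarrow> E \<subseteq> R\<^sup>+ \<Longrightarrow> S \<subseteq> R \<union> E \<Longrightarrow> acyclic S"
proof -
  assume ac: "acyclic R" and E: "E \<subseteq> R\<^sup>+" and S: "S \<subseteq> R \<union> E"
  have "S \<subseteq> R\<^sup>+" using S E by auto
  have "S\<^sup>+ \<subseteq> (R\<^sup>+)\<^sup>+"
  proof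
    fix x assume "x \<in> S\<^sup>+" thus "x \<in> (R\<^sup>+)\<^sup>+" using trancl_mono \<open>S \<subseteq> R\<^sup>+\<close> by blast
  qed
  hence "S\<^sup>+ \<subseteq> R\<^sup>+" by simp
  thus ?thesis using ac by (auto simp: acyclic_def)
qed

lemma par_eqg: "ins M v = {p} \<Longrightarrow> par M v = p"
  unfolding par_def by (rule the_equality) (auto simp: ins_def)
lemma chld_eqg: "outs M v = {c} \<Longrightarrow> chld M v = c"
  unfolding chld_def by (rule the_equality) (auto simp: outs_def)

lemma npaths_add:
  assumes "acyclic (set_mset (B + {#(a,b)#}))"
  shows "npaths (B + {#(a,b)#}) u x = npaths B u x + npaths B u a * npaths B b x"
  using npaths_arc[OF assms, of a b u x] by simp

context netw begin

lemma A_split: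
  fixes W :: "'v pnode set" and D :: "('v pnode \<times> 'v pnode) set"
  assumes D: "finite D" "\<forall>e\<in>D. e \<in># A" "\<forall>e. e \<in># A \<longrightarrow> touch W e \<longrightarrow> e \<in> D" "\<forall>e\<in>D. touch W e"
  shows "A = filter_mset (\<lambda>e. \<not> touch W e) A + mset_set D"
proof (rule multiset_eqI)
  fix e
  show "count A e = count (filter_mset (\<lambda>e. \<not> touch W e) A + mset_set D) e"
  proof (cases "touch W e")
    case True
    show ?thesis
    proof (cases "e \<in> D")
      case True
      hence eA: "e \<in># A" using D(2) by blast
      have "count A e \<le> 1" using c1 by blast
      hence "count A e = 1" using cnt_one[of e A] eA by simp
      thus ?thesis using True \<open>touch W e\<close> D(1) by simp
    next
      case False
      hence "e \<notin># A" using D(3) True by blast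
      thus ?thesis using False True D(1) by (simp add: not_in_iff)
    qed
  next
    case False
    hence "e \<notin> D" using D(4) by blast
    thus ?thesis using False D(1) by simp
  qed
qed

lemma rew_count: "finite E \<Longrightarrow> count (rew A W E) e = (if \<not> touch W e then count A e else 0) + (if e \<in> E then 1 else 0)"
  by (simp add: rew_def)

lemma rew_mem: "finite E \<Longrightarrow> e \<in># rew A W E \<longleftrightarrow> (e \<in># A \<and> \<not> touch W e) \<or> e \<in> E"
  by (auto simp: rew_def)

end

lemma ins_rew: "finite E \<Longrightarrow> v \<notin> W \<Longrightarrow> ins (rew A W E) v = {w \<in> ins A v. w \<notin> W} \<union> {w. (w,v) \<in> E}"
  by (auto simp: rew_def ins_def touch_def)
lemma outs_rew: "finite E \<Longrightarrow> v \<notin> W \<Longrightarrow> outs (rew A W E) v = {c \<in> outs A v. c \<notin> W} \<union> {c. (v,c) \<in> E}"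
  by (auto simp: rew_def outs_def touch_def)

context netw begin

theorem rew_network:
  assumes W: "W \<subseteq> V" and Efin: "finite E" and EV: "\<forall>e\<in>E. fst e \<in> V - W \<and> snd e \<in> V - W"
    and EA: "\<forall>e\<in>E. e \<notin># A" and Etr: "E \<subseteq> (set_mset A)\<^sup>+"
    and deg: "\<forall>v\<in>V-W. card (ins (rew A W E) v) = card (ins A v) \<and> card (outs (rew A W E) v) = card (outs A v)"
    and rtW: "rt \<notin> W"
  shows "is_network n {k\<in>X. Leaf k \<notin> W} (V - W, rew A W E)"
proof -
  let ?A = "rew A W E" and ?V = "V - W" and ?X = "{k\<in>X. Leaf k \<notin> W}"
  have c1': "\<forall>e. count ?A e \<le> 1"
  proof
    fix e show "count ?A e \<le> 1"
    proof (cases "e \<in> E")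
      case True thus ?thesis using EA rew_count[OF Efin, of W e] by (simp add: not_in_iff)
    next
      case False
      have "count A e \<le> 1" using c1 by blast
      thus ?thesis using False rew_count[OF Efin, of W e] by simp
    qed
  qed
  have arc1: "u \<in> ?V \<and> v \<in> ?V" if uv: "(u,v) \<in># ?A" for u v
  proof -
    have "((u,v) \<in># A \<and> \<not> touch W (u,v)) \<or> (u,v) \<in> E" using rew_mem[OF Efin] uv by blast
    thus ?thesis
    proof
      assume a: "(u,v) \<in># A \<and> \<not> touch W (u,v)"
      hence "u \<in> V" "v \<in> V" using arcV by auto
      moreover have "u \<notin> W" "v \<notin> W" using a by (auto simp: touch_def)
      ultimately show ?thesis by simp
    next
      assume "(u,v) \<in> E"
      from EV[rule_format, OF this] show ?thesis by simp
    qed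
  qed
  have arcs: "\<forall>(u,v)\<in>#?A. u \<in> ?V \<and> v \<in> ?V" using arc1 by blast
  have acy: "acyclic (set_mset ?A)"
  proof (rule acyclic_extend[OF ac Etr])
    show "set_mset ?A \<subseteq> set_mset A \<union> E" using rew_mem[OF Efin] by blast
  qed
  have indeq: "indeg ?A v = indeg A v" if "v \<in> ?V" for v
    using deg that indeg_card[OF c1'] indegc by simp
  have outdeq: "outdeg ?A v = outdeg A v" if "v \<in> ?V" for v
    using deg that outdeg_card[OF c1'] outdegc by simp
  have rtV: "rt \<in> ?V" using rt rtW by simp
  have root: "\<exists>!r. r \<in> ?V \<and> indeg ?A r = 0"
  proof (rule ex1I[of _ rt])
    show "rt \<in> ?V \<and> indeg ?A rt = 0" using rtV indeq[OF rtV] rt indegc by simp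
  next
    fix r assume r: "r \<in> ?V \<and> indeg ?A r = 0"
    hence "indeg A r = 0" using indeq[of r] by simp
    hence "ins A r = {}" using indegc fin_ins[of A r] by simp
    thus "r = rt" using rt_unique r by simp
  qed
  have typq: "is_root_node (?V,?A) v = is_root_node (V,A) v \<and> is_leaf_node (?V,?A) v = is_leaf_node (V,A) v
      \<and> is_tree_node (?V,?A) v = is_tree_node (V,A) v \<and> is_ret_node (?V,?A) v = is_ret_node (V,A) v" if "v \<in> ?V" for v
    using that indeq[OF that] outdeq[OF that]
    by (simp add: is_root_node_def is_leaf_node_def is_tree_node_def is_ret_node_def)
  have types': "\<forall>v\<in>?V. is_root_node (?V,?A) v \<or> is_leaf_node (?V,?A) v \<or> is_tree_node (?V,?A) v \<or> is_ret_node (?V,?A) v"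
  proof
    fix v assume v: "v \<in> ?V"
    show "is_root_node (?V,?A) v \<or> is_leaf_node (?V,?A) v \<or> is_tree_node (?V,?A) v \<or> is_ret_node (?V,?A) v"
      using typq[OF v] types[of v] v by simp
  qed
  have leaves': "{v \<in> ?V. is_leaf_node (?V,?A) v} = Leaf ` ?X"
  proof (intro equalityI subsetI)
    fix v assume "v \<in> {v \<in> ?V. is_leaf_node (?V,?A) v}"
    hence v: "v \<in> ?V" "is_leaf_node (V,A) v" using typq by auto
    then obtain k where k: "k \<in> X" "v = Leaf k" using leaf_Leaf by blast
    show "v \<in> Leaf ` ?X" using k v(1) by auto
  next
    fix v :: "'v pnode" assume "v \<in> Leaf ` ?X"
    then obtain k where k: "k \<in> X" "Leaf k \<notin> W" "v = Leaf k" by blast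
    have l: "is_leaf_node (V,A) v" using k leaf_Leaf by blast
    have vV: "v \<in> ?V" using l k by (simp add: is_leaf_node_def)
    show "v \<in> {v \<in> ?V. is_leaf_node (?V,?A) v}" using vV l typq[OF vV] by simp
  qed
  have lv: "?V \<inter> range Leaf = Leaf ` ?X"
  proof (intro equalityI subsetI)
    fix v assume v: "v \<in> ?V \<inter> range Leaf"
    then obtain k where k: "v = Leaf k" by blast
    hence "k \<in> X" using v Leaf_in by blast
    thus "v \<in> Leaf ` ?X" using k v by blast
  next
    fix v :: "'v pnode" assume "v \<in> Leaf ` ?X"
    then obtain k where k: "k \<in> X" "Leaf k \<notin> W" "v = Leaf k" by blast
    thus "v \<in> ?V \<inter> range Leaf" using Leaf_in by blast
  qed
  have fin': "finite ?V" using finV by simp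
  have X': "?X \<subseteq> {1..n}" using Xsub by auto
  show ?thesis unfolding is_network_def Let_def fst_conv snd_conv
    by (intro conjI; (fact fin' X' arcs c1' acy root types' leaves' lv)?)
qed

lemma rew_types:
  assumes Efin: "finite E" and EA: "\<forall>e\<in>E. e \<notin># A"
    and deg: "\<forall>v\<in>V-W. card (ins (rew A W E) v) = card (ins A v) \<and> card (outs (rew A W E) v) = card (outs A v)"
    and v: "v \<in> V - W"
  shows "is_root_node (V-W,rew A W E) v = is_root_node (V,A) v \<and> is_leaf_node (V-W,rew A W E) v = is_leaf_node (V,A) v
      \<and> is_tree_node (V-W,rew A W E) v = is_tree_node (V,A) v \<and> is_ret_node (V-W,rew A W E) v = is_ret_node (V,A) v"
proof -
  let ?A = "rew A W E"
  have c1': "\<forall>e. count ?A e \<le> 1"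
  proof
    fix e show "count ?A e \<le> 1"
    proof (cases "e \<in> E")
      case True thus ?thesis using EA rew_count[OF Efin, of W e] by (simp add: not_in_iff)
    next
      case False
      have "count A e \<le> 1" using c1 by blast
      thus ?thesis using False rew_count[OF Efin, of W e] by simp
    qed
  qed
  have "indeg ?A v = indeg A v" "outdeg ?A v = outdeg A v"
    using deg v indeg_card[OF c1'] indegc outdeg_card[OF c1'] outdegc by simp_all
  thus ?thesis using v by (simp add: is_root_node_def is_leaf_node_def is_tree_node_def is_ret_node_def)
qed

end


locale cred = netw +
  fixes i j :: nat
  assumes nc: "net_cherry (V,A) (i,j)" and ij: "i \<in> {1..n}" "j \<in> {1..n}"
begin

definition "p = par A (Leaf i)"
definition "g = par A p"
definition "W = {p, Leaf i}"
definition "E = {(g, Leaf j)}"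
definition "B = filter_mset (\<lambda>e. \<not> touch W e) A"

lemma st: "i \<in> X" "j \<in> X" "i \<noteq> j" "ins A (Leaf i) = {p}" "ins A (Leaf j) = {p}" "is_tree_node (V,A) p"
   "outs A p = {Leaf i, Leaf j}"
  using cherry_struct[OF nc] p_def by auto

lemma insp: "ins A p = {g}"
proof -
  obtain q where "ins A p = {q}" using st(6) tree_iff by blast
  thus ?thesis using par_eq g_def by simp
qed

lemma gp: "(g,p) \<in># A" using insp by (auto simp: ins_def)
lemma pLi: "(p, Leaf i) \<in># A" using st(4) by (auto simp: ins_def)
lemma pV: "p \<in> V" using pLi arcV by blast
lemma pLj: "(p, Leaf j) \<in># A" using st(5) by (auto simp: ins_def)
lemma gV: "g \<in> V" using gp arcV by blast
lemma LiV: "Leaf i \<in> V" using pLi arcV by blast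
lemma LjV: "Leaf j \<in> V" using pLj arcV by blast
lemma gnp: "g \<noteq> p" using gp acyc_cycle[OF ac, of g p] by auto
lemma Li_leaf: "is_leaf_node (V,A) (Leaf i)" using st(1) leaf_Leaf by blast
lemma Lj_leaf: "is_leaf_node (V,A) (Leaf j)" using st(2) leaf_Leaf by blast
lemma outsLi: "outs A (Leaf i) = {}" using leaf_outs Li_leaf by blast
lemma outsLj: "outs A (Leaf j) = {}" using leaf_outs Lj_leaf by blast
lemma gnL: "g \<noteq> Leaf i" "g \<noteq> Leaf j"
  using gp outsLi outsLj by (auto simp: outs_def)
lemma pnL: "p \<noteq> Leaf i" "p \<noteq> Leaf j" using st(6) tree_not_leaf Li_leaf Lj_leaf by auto
lemma LinLj: "Leaf i \<noteq> Leaf j" using st(3) by simp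
lemma pnLeaf: "p \<noteq> Leaf x"
proof
  assume "p = Leaf x"
  hence "x \<in> X" using pV Leaf_in by simp
  hence "is_leaf_node (V,A) p" using \<open>p = Leaf x\<close> leaf_Leaf by blast
  thus False using st(6) tree_not_leaf by blast
qed
lemma LeafNp: "Leaf x \<noteq> p" using pnLeaf by metis

lemma touchD: "e \<in># A \<Longrightarrow> touch W e \<Longrightarrow> e \<in> {(p, Leaf i), (g,p), (p, Leaf j)}"
proof -
  assume e: "e \<in># A" "touch W e"
  obtain x y where xy: "e = (x,y)" by (cases e)
  have "x \<in> W \<or> y \<in> W" using e xy by (simp add: touch_def)
  moreover have "x = p \<Longrightarrow> y \<in> {Leaf i, Leaf j}" using e xy st(7) by (auto simp: outs_def)
  moreover have "x \<noteq> Leaf i" using e xy outsLi by (auto simp: outs_def)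
  moreover have "y = p \<Longrightarrow> x = g" using e xy insp by (auto simp: ins_def)
  moreover have "y = Leaf i \<Longrightarrow> x = p" using e xy st(4) by (auto simp: ins_def)
  ultimately show ?thesis using xy by (auto simp: W_def)
qed

lemma A_eq: "A = B + {#(p, Leaf i), (g,p), (p, Leaf j)#}"
proof -
  have "A = B + mset_set {(p, Leaf i), (g,p), (p, Leaf j)}"
    unfolding B_def
    by (rule A_split) (use touchD gp pLi pLj in \<open>auto simp: touch_def W_def\<close>)
  moreover have "mset_set {(p, Leaf i), (g,p), (p, Leaf j)} = {#(p, Leaf i), (g,p), (p, Leaf j)#}"
    using gnp LinLj by simp
  ultimately show ?thesis by simp
qed

lemma B_mem: "(x,y) \<in># B \<Longrightarrow> (x,y) \<in># A \<and> x \<notin> W \<and> y \<notin> W"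
  by (simp add: B_def touch_def)
lemma B_sub: "B \<subseteq># A" by (simp add: B_def)

lemma ins_B: "v \<in> W \<Longrightarrow> ins B v = {}" using B_mem by (auto simp: ins_def)
lemma outs_B: "v \<in> W \<Longrightarrow> outs B v = {}" using B_mem by (auto simp: outs_def)

lemma red_eq: "net_red (V,A) (i,j) = (V - W, B + {#(g, Leaf j)#})"
proof -
  have A1: "A - {#(p, Leaf i)#} = B + {#(g,p), (p, Leaf j)#}" by (subst A_eq) simp
  have i1: "ins (B + {#(g,p), (p, Leaf j)#}) p = {g}"
    using ins_B[of p] pnL by (auto simp: ins_def W_def)
  have o1: "outs (B + {#(g,p), (p, Leaf j)#}) p = {Leaf j}"
    using outs_B[of p] gnp by (auto simp: outs_def W_def)
  have "net_red (V,A) (i,j) = suppress (V - {Leaf i}, B + {#(g,p), (p, Leaf j)#}) p"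
    using nc A1 by (simp add: net_red_def p_def[symmetric] Let_def)
  also have "\<dots> = (V - {Leaf i} - {p}, B + {#(g,p), (p, Leaf j)#} - {#(g,p), (p, Leaf j)#} + {#(g, Leaf j)#})"
    using par_eqg[OF i1] chld_eqg[OF o1] by (simp add: suppress_def Let_def)
  also have "\<dots> = (V - W, B + {#(g, Leaf j)#})" by (auto simp: W_def)
  finally show ?thesis .
qed

lemma rew_eq: "rew A W E = B + {#(g, Leaf j)#}" by (simp add: rew_def E_def B_def)

lemma EA: "\<forall>e\<in>E. e \<notin># A"
proof -
  have "(g, Leaf j) \<notin># A"
  proof
    assume "(g, Leaf j) \<in># A" hence "g \<in> ins A (Leaf j)" by (simp add: ins_def)
    thus False using st(5) gnp by simp
  qed
  thus ?thesis by (simp add: E_def)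
qed

lemma deg: "\<forall>v\<in>V-W. card (ins (rew A W E) v) = card (ins A v) \<and> card (outs (rew A W E) v) = card (outs A v)"
proof
  fix v assume v: "v \<in> V - W"
  have vW: "v \<notin> W" using v by simp
  have fE: "finite E" by (simp add: E_def)
  have ins_eq: "card (ins (rew A W E) v) = card (ins A v)"
  proof (cases "v = Leaf j")
    case True
    have "ins (rew A W E) v = {g}" using ins_rew[OF fE vW] True st(5) by (auto simp: E_def W_def)
    thus ?thesis using True st(5) by simp
  next
    case False
    have "w \<notin> W" if "w \<in> ins A v" for w
    proof
      assume "w \<in> W"
      hence "w = p \<or> w = Leaf i" by (simp add: W_def)
      thus False using that st(7) outsLi False vW outs_ins by (auto simp: W_def)
    qed
    hence "ins (rew A W E) v = ins A v" using ins_rew[OF fE vW] False by (auto simp: E_def)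
    thus ?thesis by simp
  qed
  have outs_eq: "card (outs (rew A W E) v) = card (outs A v)"
  proof (cases "v = g")
    case True
    have pin: "p \<in> outs A g" using insp outs_ins by simp
    have Lin: "Leaf i \<notin> outs A g" using st(4) gnp outs_ins by auto
    have Ljn: "Leaf j \<notin> outs A g" using st(5) gnp outs_ins by auto
    have "outs (rew A W E) v = (outs A g - {p}) \<union> {Leaf j}"
      using outs_rew[OF fE vW] True Lin by (auto simp: E_def W_def)
    moreover have "card ((outs A g - {p}) \<union> {Leaf j}) = card (outs A g)"
    proof -
      have "card (outs A g) > 0" using pin fin_outs[of A g] card_gt_0_iff by blast
      thus ?thesis using Ljn pin fin_outs[of A g] by (simp add: card_insert_if card_Diff_singleton)
    qed
    ultimately show ?thesis using True by simp
  next
    case False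
    have "c \<notin> W" if "c \<in> outs A v" for c
    proof
      assume "c \<in> W"
      hence "c = p \<or> c = Leaf i" by (simp add: W_def)
      thus False using that insp st(4) False vW outs_ins by (auto simp: W_def)
    qed
    hence "outs (rew A W E) v = outs A v" using outs_rew[OF fE vW] False by (auto simp: E_def)
    thus ?thesis by simp
  qed
  show "card (ins (rew A W E) v) = card (ins A v) \<and> card (outs (rew A W E) v) = card (outs A v)"
    using ins_eq outs_eq by simp
qed

lemma rtW: "rt \<notin> W"
proof
  assume "rt \<in> W"
  hence "ins A rt \<noteq> {}" using insp st(4) by (auto simp: W_def)
  thus False using rt by simp
qed

lemma Etr: "E \<subseteq> (set_mset A)\<^sup>+"
  using gp pLj by (auto simp: E_def)

lemma EV: "\<forall>e\<in>E. fst e \<in> V - W \<and> snd e \<in> V - W"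
  using gV LjV gnp gnL pnL LinLj by (auto simp: E_def W_def)

lemma WV: "W \<subseteq> V" using pV LiV by (simp add: W_def)

lemma Xeq: "{k\<in>X. Leaf k \<notin> W} = X - {i}"
  using pnLeaf LeafNp by (auto simp: W_def)

lemma net': "is_network n (X - {i}) (V - W, B + {#(g, Leaf j)#})"
  using rew_network[OF WV _ EV EA Etr deg rtW] Xeq rew_eq by (simp add: E_def)

end



context cred begin

abbreviation "A' \<equiv> B + {#(g, Leaf j)#}"

lemma N': "netw n (X - {i}) (V - W) A'" using net' by (simp add: netw_def)

lemma acA': "acyclic (set_mset A')" using netw.ac[OF N'] .
lemma acB: "acyclic (set_mset B)" using acyclic_sub[OF ac B_sub] .

lemma B_noin: "v \<in> W \<Longrightarrow> npaths B u v = (if u = v then 1 else 0)"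
  using npaths_noin[OF acB ins_B] by simp
lemma B_noout: "v \<in> W \<Longrightarrow> npaths B v x = (if v = x then 1 else 0)"
  using npaths_noout[OF acB outs_B] by simp
lemma B_Lj: "npaths B (Leaf j) x = (if Leaf j = x then 1 else 0)"
proof -
  have "outs B (Leaf j) = {}" using outsLj B_sub by (auto simp: outs_def dest: mset_subset_eqD)
  thus ?thesis using npaths_noout[OF acB] by simp
qed

lemma paths_eq:
  assumes u: "u \<notin> W" and x: "x \<notin> W"
  shows "npaths A' u x = npaths A u x"
proof -
  define B1 where "B1 = B + {#(p, Leaf j)#}"
  define B2 where "B2 = B1 + {#(p, Leaf i)#}"
  have AB: "A = B2 + {#(g,p)#}" unfolding B2_def B1_def by (subst A_eq) simp
  have s2: "B2 \<subseteq># A" by (subst AB, rule mset_subset_eq_add_left)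
  have s1: "B1 \<subseteq># A" using s2 unfolding B2_def by (meson mset_subset_eq_add_left subset_mset.order_trans)
  have ac1: "acyclic (set_mset B1)" using acyclic_sub[OF ac s1] by (simp add: B1_def)
  have ac2: "acyclic (set_mset B2)" using acyclic_sub[OF ac s2] by (simp add: B2_def)
  have acA: "acyclic (set_mset (B2 + {#(g,p)#}))" using ac AB by simp
  have acB1: "acyclic (set_mset (B + {#(p, Leaf j)#}))" using ac1 by (simp add: B1_def)
  have acB2: "acyclic (set_mset (B1 + {#(p, Leaf i)#}))" using ac2 by (simp add: B2_def)
  have pW: "p \<in> W" "Leaf i \<in> W" by (simp_all add: W_def)
  have up: "u \<noteq> p" "x \<noteq> p" "x \<noteq> Leaf i" using u x by (auto simp: W_def)
  have P1: "npaths B1 y z = npaths B y z + npaths B y p * npaths B (Leaf j) z" for y z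
    unfolding B1_def by (rule npaths_add[OF acB1])
  have P2: "npaths B2 y z = npaths B1 y z + npaths B1 y p * npaths B1 (Leaf i) z" for y z
    unfolding B2_def by (rule npaths_add[OF acB2])
  have PA: "npaths A y z = npaths B2 y z + npaths B2 y g * npaths B2 p z" for y z
    using npaths_add[OF acA] AB by simp
  have PA': "npaths A' y z = npaths B y z + npaths B y g * npaths B (Leaf j) z" for y z
    by (rule npaths_add[OF acA'])
  have b1: "npaths B y p = (if y = p then 1 else 0)" for y using B_noin[OF pW(1)] .
  have b2: "npaths B p z = (if p = z then 1 else 0)" for z using B_noout[OF pW(1)] .
  have b3: "npaths B (Leaf i) z = (if Leaf i = z then 1 else 0)" for z using B_noout[OF pW(2)] .
  have b4: "npaths B (Leaf j) z = (if Leaf j = z then 1 else 0)" for z using B_Lj .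
  have c1: "npaths B1 u x = npaths B u x" using P1[of u x] b1 up by simp
  have c2: "npaths B1 u p = 0" using P1[of u p] b1 up by simp
  have c3: "npaths B2 u x = npaths B u x" using P2[of u x] c1 c2 by simp
  have c4: "npaths B2 u g = npaths B u g"
    using P2[of u g] P1[of u g] P1[of u p] b1 up by simp
  have c5: "npaths B1 p x = (if Leaf j = x then 1 else 0)" using P1[of p x] b1 b2 b4 up by simp
  have c6: "npaths B1 p p = 1" using P1[of p p] b1 b4 LeafNp by simp
  have c7: "npaths B1 (Leaf i) x = 0" using P1[of "Leaf i" x] b1 b3 up pnL by simp
  have c8: "npaths B2 p x = (if Leaf j = x then 1 else 0)" using P2[of p x] c5 c6 c7 by simp
  show ?thesis using PA[of u x] PA'[of u x] c3 c4 c8 b4 by simp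
qed

lemma fE: "finite E" by (simp add: E_def)

lemma typ': "v \<in> V - W \<Longrightarrow> is_root_node (V-W,A') v = is_root_node (V,A) v \<and> is_leaf_node (V-W,A') v = is_leaf_node (V,A) v
      \<and> is_tree_node (V-W,A') v = is_tree_node (V,A) v \<and> is_ret_node (V-W,A') v = is_ret_node (V,A) v"
  using rew_types[OF fE EA deg] rew_eq by simp

lemma retW: "is_ret_node (V,A) v \<Longrightarrow> v \<notin> W"
  using st(6) Li_leaf ret_not_tree ret_not_leaf by (auto simp: W_def)

lemma VH': "V_H (V - W, A') = V_H (V,A)"
proof (intro equalityI subsetI)
  fix v assume "v \<in> V_H (V - W, A')"
  hence v: "v \<in> V - W" "is_ret_node (V-W,A') v" by (auto simp: V_H_def)
  thus "v \<in> V_H (V,A)" using typ'[OF v(1)] by (simp add: VH_eq)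
next
  fix v assume "v \<in> V_H (V,A)"
  hence v: "v \<in> V" "is_ret_node (V,A) v" by (auto simp: VH_eq)
  hence vW: "v \<in> V - W" using retW by simp
  thus "v \<in> V_H (V - W, A')" using typ'[OF vW] v by (simp add: V_H_def)
qed

lemma VT': "V_T (V - W, A') = V_T (V,A) - W"
proof (intro equalityI subsetI)
  fix v assume "v \<in> V_T (V - W, A')"
  hence v: "v \<in> V - W" "is_leaf_node (V-W,A') v \<or> is_tree_node (V-W,A') v" by (auto simp: V_T_def)
  thus "v \<in> V_T (V,A) - W" using typ'[OF v(1)] by (simp add: VT_eq)
next
  fix v assume "v \<in> V_T (V,A) - W"
  hence v: "v \<in> V - W" "is_leaf_node (V,A) v \<or> is_tree_node (V,A) v" by (auto simp: VT_eq)
  thus "v \<in> V_T (V - W, A')" using typ'[OF v(1)] by (simp add: V_T_def)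
qed

lemma mu': "u \<in> V - W \<Longrightarrow> mu_vec n (V - W, A') u = (mu_vec n (V,A) u)(i := 0)"
proof (rule ext)
  fix k assume u: "u \<in> V - W"
  show "mu_vec n (V - W, A') u k = ((mu_vec n (V,A) u)(i := 0)) k"
  proof (cases "k = 0")
    case True
    have "(\<Sum>h\<in>V_H (V,A). npaths A' u h) = (\<Sum>h\<in>V_H (V,A). npaths A u h)"
    proof (rule sum.cong[OF refl])
      fix h assume "h \<in> V_H (V,A)"
      hence "h \<notin> W" using retW by (simp add: VH_eq)
      thus "npaths A' u h = npaths A u h" using paths_eq u by simp
    qed
    thus ?thesis using True ij unfolding mu_vec_def snd_conv VH' by simp
  next
    case False
    show ?thesis
    proof (cases "k = i")
      case True thus ?thesis using False by (simp add: mu_vec_def W_def)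
    next
      case ki: False
      have LW: "Leaf k \<notin> W" using ki LeafNp by (simp add: W_def)
      have "npaths A' u (Leaf k) = npaths A u (Leaf k)" using paths_eq u LW by simp
      thus ?thesis using False ki LW by (simp add: mu_vec_def)
    qed
  qed
qed

lemma mu_p: "mu_vec n (V,A) p = delta {i,j}"
proof (rule ext)
  fix k show "mu_vec n (V,A) p k = delta {i,j} k"
    using mu_tree[OF st(6) st(7) LinLj, of k] mu_leaf[OF st(1), of k] mu_leaf[OF st(2), of k] st(3)
    by (simp add: delta_def)
qed

lemma WVT: "W \<subseteq> V_T (V,A)"
  using tree_VT[OF st(6)] leaf_VT[OF st(1)] by (simp add: W_def)

lemma munet': "mu_net n (V - W, A') = image_mset (\<lambda>\<mu>. \<mu>(i := 0)) (mu_net n (V,A) - {#delta {i}, delta {i,j}#})"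
proof -
  let ?m = "mu_vec n (V,A)"
  have fin: "finite (V_T (V,A))" by (rule finVT)
  have U: "V_T (V,A) = (V_T (V,A) - W) \<union> W" using WVT by auto
  have fW: "finite W" by (simp add: W_def)
  have "mset_set ((V_T (V,A) - W) \<union> W) = mset_set (V_T (V,A) - W) + mset_set W"
    by (rule mset_set_Union) (use fin fW in auto)
  hence "mset_set (V_T (V,A)) = mset_set (V_T (V,A) - W) + mset_set W" using U by simp
  moreover have "mset_set W = {#p, Leaf i#}" using pnL by (simp add: W_def)
  ultimately have "mu_net n (V,A) = image_mset ?m (mset_set (V_T (V,A) - W)) + {#delta {i,j}, delta {i}#}"
    using mu_p mu_leaf_fun[OF st(1)] by (simp add: mu_net_def)
  hence "mu_net n (V,A) - {#delta {i}, delta {i,j}#} = image_mset ?m (mset_set (V_T (V,A) - W))"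
    by simp
  hence "image_mset (\<lambda>\<mu>. \<mu>(i := 0)) (mu_net n (V,A) - {#delta {i}, delta {i,j}#})
       = image_mset (\<lambda>u. (?m u)(i := 0)) (mset_set (V_T (V,A) - W))"
    by (simp add: image_mset.compositionality comp_def)
  also have "\<dots> = image_mset (mu_vec n (V - W, A')) (mset_set (V_T (V,A) - W))"
  proof (rule image_mset_cong)
    fix u assume "u \<in># mset_set (V_T (V,A) - W)"
    hence "u \<in> V - W" using fin by (auto simp: VT_eq)
    thus "(?m u)(i := 0) = mu_vec n (V - W, A') u" using mu' by simp
  qed
  also have "\<dots> = mu_net n (V - W, A')" unfolding mu_net_def VT' ..
  finally show ?thesis by simp
qed

lemma cred_main: "is_network n (X - {i}) (net_red (V,A) (i,j)) \<and>
   ms_red n (mu_net n (V,A)) (i,j) = Some (mu_net n (net_red (V,A) (i,j)))"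
proof -
  have c: "ms_cherry n (mu_net n (V,A)) (i,j)" by (rule cherry_ms[OF nc ij])
  have nr: "\<not> ms_ret_cherry n (mu_net n (V,A)) (i,j)" by (rule ms_excl[OF c])
  show ?thesis using net' red_eq c nr munet' by (simp add: ms_red_def)
qed

end



lemma card_swap:
  assumes "finite S" "T \<subseteq> S" "U \<inter> S = {}" "card T = card U" "finite U"
  shows "card ((S - T) \<union> U) = card S"
proof -
  have "card ((S - T) \<union> U) = card (S - T) + card U"
    by (rule card_Un_disjoint) (use assms in auto)
  also have "card (S - T) = card S - card T" by (rule card_Diff_subset) (use assms finite_subset in auto)
  also have "card T \<le> card S" by (rule card_mono) (use assms in auto)
  ultimately show ?thesis using assms(4) by simp
qed

locale rred = netw +
  fixes i j :: nat
  assumes nr: "net_ret_cherry (V,A) (i,j)" and ij: "i \<in> {1..n}" "j \<in> {1..n}"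
begin

definition "h = par A (Leaf i)"
definition "g = par A (Leaf j)"
definition "f = par A g"
definition "q = (SOME q. q \<in> ins A h \<and> q \<noteq> g)"
definition "W = {h, g}"
definition "E = {(q, Leaf i), (f, Leaf j)}"
definition "B = filter_mset (\<lambda>e. \<not> touch W e) A"

lemma st: "i \<in> X" "j \<in> X" "i \<noteq> j" "ins A (Leaf i) = {h}" "ins A (Leaf j) = {g}" "is_ret_node (V,A) h"
     "is_tree_node (V,A) g" "outs A h = {Leaf i}" "outs A g = {h, Leaf j}" "(g,h) \<in># A" "h \<noteq> Leaf j" "g \<noteq> h"
  using ret_struct[OF nr] h_def g_def by auto

lemma insg: "ins A g = {f}"
proof -
  obtain x where "ins A g = {x}" using st(7) tree_iff by blast
  thus ?thesis using par_eq f_def by simp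
qed

lemma insh: "ins A h = {g, q}" "g \<noteq> q"
proof -
  obtain a b where ab: "ins A h = {a,b}" "a \<noteq> b" using st(6) ret_iff by blast
  have gin: "g \<in> ins A h" using st(10) by (simp add: ins_def)
  have ex: "\<exists>q. q \<in> ins A h \<and> q \<noteq> g" using ab by auto
  have qq: "q \<in> ins A h \<and> q \<noteq> g" unfolding q_def by (rule someI_ex[OF ex])
  show "ins A h = {g, q}" using ab gin qq by auto
  show "g \<noteq> q" using qq by metis
qed

lemma fg: "(f,g) \<in># A" using insg by (auto simp: ins_def)
lemma qh: "(q,h) \<in># A" using insh by (auto simp: ins_def)
lemma hLi: "(h, Leaf i) \<in># A" using st(4) by (auto simp: ins_def)
lemma gLj: "(g, Leaf j) \<in># A" using st(5) by (auto simp: ins_def)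
lemma gV: "g \<in> V" using gLj arcV by blast
lemma hV: "h \<in> V" using hLi arcV by blast
lemma fV: "f \<in> V" using fg arcV by blast
lemma qV: "q \<in> V" using qh arcV by blast
lemma LiV: "Leaf i \<in> V" using hLi arcV by blast
lemma LjV: "Leaf j \<in> V" using gLj arcV by blast
lemma Li_leaf: "is_leaf_node (V,A) (Leaf i)" using st(1) leaf_Leaf by blast
lemma Lj_leaf: "is_leaf_node (V,A) (Leaf j)" using st(2) leaf_Leaf by blast
lemma outsLi: "outs A (Leaf i) = {}" using leaf_outs Li_leaf by blast
lemma outsLj: "outs A (Leaf j) = {}" using leaf_outs Lj_leaf by blast
lemma LinLj: "Leaf i \<noteq> Leaf j" using st(3) by simp

lemma nLeaf_out: "(x,y) \<in># A \<Longrightarrow> x \<noteq> Leaf i \<and> x \<noteq> Leaf j"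
  using outsLi outsLj by (auto simp: outs_def)

lemma fng: "f \<noteq> g" using fg acyc_cycle[OF ac, of f g] by auto
lemma qnh: "q \<noteq> h" using qh acyc_cycle[OF ac, of q h] by auto
lemma fnh: "f \<noteq> h"
proof
  assume "f = h"
  hence "g \<in> outs A h" using fg by (simp add: outs_def)
  thus False using st(8) st(7) Li_leaf tree_not_leaf by auto
qed
lemma hnL: "h \<noteq> Leaf i" "h \<noteq> Leaf j" using nLeaf_out[OF hLi] by auto
lemma gnL: "g \<noteq> Leaf i" "g \<noteq> Leaf j" using nLeaf_out[OF gLj] by auto
lemma fnL: "f \<noteq> Leaf i" "f \<noteq> Leaf j" using nLeaf_out[OF fg] by auto
lemma qnL: "q \<noteq> Leaf i" "q \<noteq> Leaf j" using nLeaf_out[OF qh] by auto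
lemma hnLeaf: "h \<noteq> Leaf x"
proof
  assume "h = Leaf x"
  hence "x \<in> X" using hV Leaf_in by simp
  hence "is_leaf_node (V,A) h" using \<open>h = Leaf x\<close> leaf_Leaf by blast
  thus False using st(6) ret_not_leaf by blast
qed
lemma gnLeaf: "g \<noteq> Leaf x"
proof
  assume "g = Leaf x"
  hence "x \<in> X" using gV Leaf_in by simp
  hence "is_leaf_node (V,A) g" using \<open>g = Leaf x\<close> leaf_Leaf by blast
  thus False using st(7) tree_not_leaf by blast
qed
lemma Leafnhg: "Leaf x \<noteq> h" "Leaf x \<noteq> g" using hnLeaf gnLeaf by metis+

lemma touchD: "e \<in># A \<Longrightarrow> touch W e \<Longrightarrow> e \<in> {(g,h), (q,h), (h, Leaf i), (f,g), (g, Leaf j)}"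
proof -
  assume e: "e \<in># A" "touch W e"
  obtain x y where xy: "e = (x,y)" by (cases e)
  have "x \<in> W \<or> y \<in> W" using e xy by (simp add: touch_def)
  moreover have "x = h \<Longrightarrow> y = Leaf i" using e xy st(8) by (auto simp: outs_def)
  moreover have "x = g \<Longrightarrow> y = h \<or> y = Leaf j" using e xy st(9) by (auto simp: outs_def)
  moreover have "y = h \<Longrightarrow> x = g \<or> x = q" using e xy insh by (auto simp: ins_def)
  moreover have "y = g \<Longrightarrow> x = f" using e xy insg by (auto simp: ins_def)
  ultimately show ?thesis using xy by (auto simp: W_def)
qed

lemma A_eq: "A = B + {#(g,h), (q,h), (h, Leaf i), (f,g), (g, Leaf j)#}"
proof -
  have "A = B + mset_set {(g,h), (q,h), (h, Leaf i), (f,g), (g, Leaf j)}"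
    unfolding B_def
    by (rule A_split) (use touchD st(10) qh hLi fg gLj in \<open>auto simp: touch_def W_def\<close>)
  moreover have "mset_set {(g,h), (q,h), (h, Leaf i), (f,g), (g, Leaf j)} = {#(g,h), (q,h), (h, Leaf i), (f,g), (g, Leaf j)#}"
    using insh(2) st(12) fng qnh fnh hnL gnL fnL qnL LinLj by simp
  ultimately show ?thesis by simp
qed

lemma B_mem: "(x,y) \<in># B \<Longrightarrow> (x,y) \<in># A \<and> x \<notin> W \<and> y \<notin> W"
  by (simp add: B_def touch_def)
lemma B_sub: "B \<subseteq># A" by (simp add: B_def)
lemma ins_B: "v \<in> W \<Longrightarrow> ins B v = {}" using B_mem by (auto simp: ins_def)
lemma outs_B: "v \<in> W \<Longrightarrow> outs B v = {}" using B_mem by (auto simp: outs_def)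

lemma not_cherry: "\<not> net_cherry (V,A) (i,j)"
  using st(12) by (simp add: net_cherry_def h_def[symmetric] g_def[symmetric])

lemma red_eq: "net_red (V,A) (i,j) = (V - W, B + {#(q, Leaf i), (f, Leaf j)#})"
proof -
  have A1: "A - {#(g,h)#} = B + {#(q,h), (h, Leaf i), (f,g), (g, Leaf j)#}" by (subst A_eq) simp
  have i1: "ins (B + {#(q,h), (h, Leaf i), (f,g), (g, Leaf j)#}) h = {q}"
    using ins_B[of h] hnL st(12) fnh by (auto simp: ins_def W_def)
  have o1: "outs (B + {#(q,h), (h, Leaf i), (f,g), (g, Leaf j)#}) h = {Leaf i}"
    using outs_B[of h] qnh st(12) fnh by (auto simp: outs_def W_def)
  have s1: "suppress (V, B + {#(q,h), (h, Leaf i), (f,g), (g, Leaf j)#}) h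
       = (V - {h}, B + {#(f,g), (g, Leaf j), (q, Leaf i)#})"
    using par_eqg[OF i1] chld_eqg[OF o1] by (simp add: suppress_def Let_def)
  have i2: "ins (B + {#(f,g), (g, Leaf j), (q, Leaf i)#}) g = {f}"
    using ins_B[of g] gnL by (auto simp: ins_def W_def)
  have o2: "outs (B + {#(f,g), (g, Leaf j), (q, Leaf i)#}) g = {Leaf j}"
    using outs_B[of g] fng insh(2) by (auto simp: outs_def W_def)
  have s2: "suppress (V - {h}, B + {#(f,g), (g, Leaf j), (q, Leaf i)#}) g
       = (V - {h} - {g}, B + {#(f,g), (g, Leaf j), (q, Leaf i)#} - {#(f,g), (g, Leaf j)#} + {#(f, Leaf j)#})"
    using par_eqg[OF i2] chld_eqg[OF o2] by (simp add: suppress_def Let_def)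
  have "net_red (V,A) (i,j) = suppress (suppress (V, A - {#(g,h)#}) h) g"
    using not_cherry by (simp add: net_red_def h_def[symmetric] g_def[symmetric] Let_def)
  also have "\<dots> = (V - {h} - {g}, B + {#(f,g), (g, Leaf j), (q, Leaf i)#} - {#(f,g), (g, Leaf j)#} + {#(f, Leaf j)#})"
    using A1 s1 s2 by simp
  also have "\<dots> = (V - W, B + {#(q, Leaf i), (f, Leaf j)#})" by (auto simp: W_def)
  finally show ?thesis .
qed

end



context rred begin

lemma fE: "finite E" by (simp add: E_def)
lemma rew_eq: "rew A W E = B + {#(q, Leaf i), (f, Leaf j)#}"
  using LinLj by (simp add: rew_def E_def B_def)

lemma EA: "\<forall>e\<in>E. e \<notin># A"
proof -
  have "(q, Leaf i) \<notin># A"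
  proof
    assume "(q, Leaf i) \<in># A" hence "q \<in> ins A (Leaf i)" by (simp add: ins_def)
    thus False using st(4) qnh by simp
  qed
  moreover have "(f, Leaf j) \<notin># A"
  proof
    assume "(f, Leaf j) \<in># A" hence "f \<in> ins A (Leaf j)" by (simp add: ins_def)
    thus False using st(5) fng by simp
  qed
  ultimately show ?thesis by (simp add: E_def)
qed

lemma insW: "v \<notin> W \<Longrightarrow> {w \<in> ins A v. w \<in> W} = (if v = Leaf i then {h} else {}) \<union> (if v = Leaf j then {g} else {})"
proof -
  assume v: "v \<notin> W"
  have "h \<in> ins A v \<longleftrightarrow> v = Leaf i" using st(8) outs_ins by auto
  moreover have "g \<in> ins A v \<longleftrightarrow> v = Leaf j" using st(9) outs_ins v by (auto simp: W_def)
  ultimately show ?thesis using LinLj by (auto simp: W_def)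
qed

lemma outsW: "v \<notin> W \<Longrightarrow> {c \<in> outs A v. c \<in> W} = (if v = q then {h} else {}) \<union> (if v = f then {g} else {})"
proof -
  assume v: "v \<notin> W"
  have "h \<in> outs A v \<longleftrightarrow> v = q" using insh outs_ins v by (auto simp: W_def)
  moreover have "g \<in> outs A v \<longleftrightarrow> v = f" using insg outs_ins by auto
  ultimately show ?thesis by (auto simp: W_def)
qed

lemma deg: "\<forall>v\<in>V-W. card (ins (rew A W E) v) = card (ins A v) \<and> card (outs (rew A W E) v) = card (outs A v)"
proof
  fix v assume v: "v \<in> V - W"
  have vW: "v \<notin> W" using v by simp
  have i1: "ins (rew A W E) v = (ins A v - {w \<in> ins A v. w \<in> W}) \<union> {w. (w,v) \<in> E}"
    using ins_rew[OF fE vW] by auto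
  have Ei: "{w. (w,v) \<in> E} = (if v = Leaf i then {q} else {}) \<union> (if v = Leaf j then {f} else {})"
    using LinLj by (auto simp: E_def)
  have ci: "card (ins (rew A W E) v) = card (ins A v)"
    unfolding i1
  proof (rule card_swap[OF fin_ins])
    show "{w \<in> ins A v. w \<in> W} \<subseteq> ins A v" by auto
    show "{w. (w,v) \<in> E} \<inter> ins A v = {}" using Ei st(4) st(5) qnh fng by auto
    show "card {w \<in> ins A v. w \<in> W} = card {w. (w,v) \<in> E}" unfolding insW[OF vW] Ei using LinLj by auto
    show "finite {w. (w,v) \<in> E}" unfolding Ei by simp
  qed
  have o1: "outs (rew A W E) v = (outs A v - {c \<in> outs A v. c \<in> W}) \<union> {c. (v,c) \<in> E}"
    using outs_rew[OF fE vW] by auto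
  have Eo: "{c. (v,c) \<in> E} = (if v = q then {Leaf i} else {}) \<union> (if v = f then {Leaf j} else {})"
    using LinLj by (auto simp: E_def)
  have co: "card (outs (rew A W E) v) = card (outs A v)"
    unfolding o1
  proof (rule card_swap[OF fin_outs])
    show "{c \<in> outs A v. c \<in> W} \<subseteq> outs A v" by auto
    have "Leaf i \<notin> outs A q" using st(4) qnh outs_ins by auto
    moreover have "Leaf j \<notin> outs A f" using st(5) fng outs_ins by auto
    ultimately show "{c. (v,c) \<in> E} \<inter> outs A v = {}" by (auto simp: E_def)
    show "card {c \<in> outs A v. c \<in> W} = card {c. (v,c) \<in> E}" unfolding outsW[OF vW] Eo using LinLj st(12) by auto
    show "finite {c. (v,c) \<in> E}" unfolding Eo by simp
  qed
  show "card (ins (rew A W E) v) = card (ins A v) \<and> card (outs (rew A W E) v) = card (outs A v)"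
    using ci co by simp
qed

lemma rtW: "rt \<notin> W"
proof
  assume "rt \<in> W"
  hence "ins A rt \<noteq> {}" using insh insg by (auto simp: W_def)
  thus False using rt by simp
qed

lemma Etr: "E \<subseteq> (set_mset A)\<^sup>+"
proof -
  have "(q, Leaf i) \<in> (set_mset A)\<^sup>+" using qh hLi by (meson r_into_trancl' trancl_into_trancl)
  moreover have "(f, Leaf j) \<in> (set_mset A)\<^sup>+" using fg gLj by (meson r_into_trancl' trancl_into_trancl)
  ultimately show ?thesis by (simp add: E_def)
qed

lemma EV: "\<forall>e\<in>E. fst e \<in> V - W \<and> snd e \<in> V - W"
  using qV fV LiV LjV insh(2) qnh fng fnh Leafnhg by (auto simp: E_def W_def)

lemma WV: "W \<subseteq> V" using hV gV by (simp add: W_def)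

lemma Xeq: "{k\<in>X. Leaf k \<notin> W} = X"
  using Leafnhg by (auto simp: W_def)

lemma net': "is_network n X (V - W, B + {#(q, Leaf i), (f, Leaf j)#})"
  using rew_network[OF WV fE EV EA Etr deg rtW] Xeq rew_eq by simp

end



context rred begin

abbreviation "A' \<equiv> B + {#(q, Leaf i), (f, Leaf j)#}"

lemma N': "netw n X (V - W) A'" using net' by (simp add: netw_def)
lemma acA': "acyclic (set_mset A')" using netw.ac[OF N'] .
lemma acB: "acyclic (set_mset B)" using acyclic_sub[OF ac B_sub] .

lemma B_noin: "v \<in> W \<Longrightarrow> npaths B u v = (if u = v then 1 else 0)"
  using npaths_noin[OF acB ins_B] by simp
lemma B_noout: "v \<in> W \<Longrightarrow> npaths B v x = (if v = x then 1 else 0)"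
  using npaths_noout[OF acB outs_B] by simp
lemma B_Li_out: "npaths B (Leaf i) x = (if Leaf i = x then 1 else 0)"
proof -
  have "outs B (Leaf i) = {}" using outsLi B_sub by (auto simp: outs_def dest: mset_subset_eqD)
  thus ?thesis using npaths_noout[OF acB] by simp
qed
lemma B_Lj_out: "npaths B (Leaf j) x = (if Leaf j = x then 1 else 0)"
proof -
  have "outs B (Leaf j) = {}" using outsLj B_sub by (auto simp: outs_def dest: mset_subset_eqD)
  thus ?thesis using npaths_noout[OF acB] by simp
qed
lemma B_Li_in: "npaths B u (Leaf i) = (if u = Leaf i then 1 else 0)"
proof -
  have "ins B (Leaf i) = {}" using st(4) B_mem by (auto simp: ins_def W_def)
  thus ?thesis using npaths_noin[OF acB] by simp
qed
lemma B_Lj_in: "npaths B u (Leaf j) = (if u = Leaf j then 1 else 0)"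
proof -
  have "ins B (Leaf j) = {}" using st(5) B_mem by (auto simp: ins_def W_def)
  thus ?thesis using npaths_noin[OF acB] by simp
qed

lemma paths_formulas:
  assumes u: "u \<notin> W"
  shows "x \<notin> W \<Longrightarrow> npaths A u x = npaths B u x + npaths B u q * (if Leaf i = x then 1 else 0)
            + npaths B u f * ((if Leaf j = x then 1 else 0) + (if Leaf i = x then 1 else 0))"
    and "npaths A' u x = npaths B u x + npaths B u q * (if Leaf i = x then 1 else 0)
            + npaths B u f * (if Leaf j = x then 1 else 0)"
    and "npaths A u h = npaths B u q + npaths B u f"
proof -
  define B1 where "B1 = B + {#(h, Leaf i)#}"
  define B2 where "B2 = B1 + {#(g, Leaf j)#}"
  define B3 where "B3 = B2 + {#(g, h)#}"
  define B4 where "B4 = B3 + {#(q, h)#}"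
  define C where "C = B + {#(q, Leaf i)#}"
  have AB: "A = B4 + {#(f,g)#}" unfolding B4_def B3_def B2_def B1_def
    by (subst A_eq) (simp add: add_mset_commute)
  have A'C: "A' = C + {#(f, Leaf j)#}" unfolding C_def by (simp add: add_mset_commute)
  have s4: "B4 \<subseteq># A" by (subst AB, rule mset_subset_eq_add_left)
  have s3: "B3 \<subseteq># A" using s4 unfolding B4_def by (meson mset_subset_eq_add_left subset_mset.order_trans)
  have s2: "B2 \<subseteq># A" using s3 unfolding B3_def by (meson mset_subset_eq_add_left subset_mset.order_trans)
  have s1: "B1 \<subseteq># A" using s2 unfolding B2_def by (meson mset_subset_eq_add_left subset_mset.order_trans)
  have sC: "C \<subseteq># A'" by (subst A'C, rule mset_subset_eq_add_left)
  have a1: "acyclic (set_mset (B + {#(h, Leaf i)#}))" using acyclic_sub[OF ac s1] by (simp add: B1_def)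
  have a2: "acyclic (set_mset (B1 + {#(g, Leaf j)#}))" using acyclic_sub[OF ac s2] by (simp add: B2_def)
  have a3: "acyclic (set_mset (B2 + {#(g, h)#}))" using acyclic_sub[OF ac s3] by (simp add: B3_def)
  have a4: "acyclic (set_mset (B3 + {#(q, h)#}))" using acyclic_sub[OF ac s4] by (simp add: B4_def)
  have a5: "acyclic (set_mset (B4 + {#(f, g)#}))" using ac AB by simp
  have aC: "acyclic (set_mset (B + {#(q, Leaf i)#}))" using acyclic_sub[OF acA' sC] by (simp add: C_def)
  have aA': "acyclic (set_mset (C + {#(f, Leaf j)#}))" using acA' by (simp only: A'C)
  have P1: "npaths B1 y z = npaths B y z + npaths B y h * npaths B (Leaf i) z" for y z
    unfolding B1_def by (rule npaths_add[OF a1])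
  have P2: "npaths B2 y z = npaths B1 y z + npaths B1 y g * npaths B1 (Leaf j) z" for y z
    unfolding B2_def by (rule npaths_add[OF a2])
  have P3: "npaths B3 y z = npaths B2 y z + npaths B2 y g * npaths B2 h z" for y z
    unfolding B3_def by (rule npaths_add[OF a3])
  have P4: "npaths B4 y z = npaths B3 y z + npaths B3 y q * npaths B3 h z" for y z
    unfolding B4_def by (rule npaths_add[OF a4])
  have PA: "npaths A y z = npaths B4 y z + npaths B4 y f * npaths B4 g z" for y z
    using npaths_add[OF a5] AB by simp
  have PC: "npaths C y z = npaths B y z + npaths B y q * npaths B (Leaf i) z" for y z
    unfolding C_def by (rule npaths_add[OF aC])
  have PA': "npaths A' y z = npaths C y z + npaths C y f * npaths C (Leaf j) z" for y z
    unfolding A'C by (rule npaths_add[OF aA'])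
  have hW: "h \<in> W" "g \<in> W" by (simp_all add: W_def)
  have bh1: "npaths B y h = (if y = h then 1 else 0)" for y using B_noin[OF hW(1)] .
  have bg1: "npaths B y g = (if y = g then 1 else 0)" for y using B_noin[OF hW(2)] .
  have bh2: "npaths B h z = (if h = z then 1 else 0)" for z using B_noout[OF hW(1)] .
  have bg2: "npaths B g z = (if g = z then 1 else 0)" for z using B_noout[OF hW(2)] .
  have uhg: "u \<noteq> h" "u \<noteq> g" using u by (auto simp: W_def)
  have d: "q \<noteq> h" "q \<noteq> g" "f \<noteq> h" "f \<noteq> g" "g \<noteq> h" "h \<noteq> g"
    "q \<noteq> Leaf i" "q \<noteq> Leaf j" "f \<noteq> Leaf i" "f \<noteq> Leaf j" "h \<noteq> Leaf i" "h \<noteq> Leaf j"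
    "g \<noteq> Leaf i" "g \<noteq> Leaf j" "Leaf i \<noteq> Leaf j" "Leaf j \<noteq> Leaf i"
    "Leaf i \<noteq> h" "Leaf j \<noteq> h" "Leaf i \<noteq> g" "Leaf j \<noteq> g"
    using qnh insh(2) fnh fng st(12) qnL fnL hnL gnL LinLj Leafnhg by auto
  note base = bh1 bg1 bh2 bg2 B_Li_out B_Lj_out B_Li_in B_Lj_in
  show "x \<notin> W \<Longrightarrow> npaths A u x = npaths B u x + npaths B u q * (if Leaf i = x then 1 else 0)
            + npaths B u f * ((if Leaf j = x then 1 else 0) + (if Leaf i = x then 1 else 0))"
  proof -
    assume x: "x \<notin> W"
    have xhg: "x \<noteq> h" "x \<noteq> g" "h \<noteq> x" "g \<noteq> x" using x by (auto simp: W_def)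
    show ?thesis using uhg xhg d by (simp add: PA P4 P3 P2 P1 base)
  qed
  show "npaths A' u x = npaths B u x + npaths B u q * (if Leaf i = x then 1 else 0)
            + npaths B u f * (if Leaf j = x then 1 else 0)"
    unfolding PA' using uhg d by (simp add: PC base)
  show "npaths A u h = npaths B u q + npaths B u f"
    using uhg d by (simp add: PA P4 P3 P2 P1 base)
qed

end



context rred begin

lemma typ': "v \<in> V - W \<Longrightarrow> is_root_node (V-W,A') v = is_root_node (V,A) v \<and> is_leaf_node (V-W,A') v = is_leaf_node (V,A) v
      \<and> is_tree_node (V-W,A') v = is_tree_node (V,A) v \<and> is_ret_node (V-W,A') v = is_ret_node (V,A) v"
  using rew_types[OF fE EA deg] rew_eq by simp

lemma hVH: "h \<in> V_H (V,A)" using st(6) ret_VH by simp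

lemma VH': "V_H (V - W, A') = V_H (V,A) - {h}"
proof (intro equalityI subsetI)
  fix v assume "v \<in> V_H (V - W, A')"
  hence v: "v \<in> V - W" "is_ret_node (V-W,A') v" by (auto simp: V_H_def)
  thus "v \<in> V_H (V,A) - {h}" using typ'[OF v(1)] by (auto simp: VH_eq W_def)
next
  fix v assume "v \<in> V_H (V,A) - {h}"
  hence v: "v \<in> V" "is_ret_node (V,A) v" "v \<noteq> h" by (auto simp: VH_eq)
  have "v \<noteq> g" using v(2) st(7) ret_not_tree by blast
  hence vW: "v \<in> V - W" using v by (simp add: W_def)
  thus "v \<in> V_H (V - W, A')" using typ'[OF vW] v by (simp add: V_H_def)
qed

lemma gVT: "g \<in> V_T (V,A)" using tree_VT[OF st(7)] .
lemma hnVT: "h \<notin> V_T (V,A)" using st(6) ret_not_tree ret_not_leaf by (simp add: VT_eq)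

lemma VT': "V_T (V - W, A') = V_T (V,A) - {g}"
proof (intro equalityI subsetI)
  fix v assume "v \<in> V_T (V - W, A')"
  hence v: "v \<in> V - W" "is_leaf_node (V-W,A') v \<or> is_tree_node (V-W,A') v" by (auto simp: V_T_def)
  thus "v \<in> V_T (V,A) - {g}" using typ'[OF v(1)] by (auto simp: VT_eq W_def)
next
  fix v assume "v \<in> V_T (V,A) - {g}"
  hence v: "v \<in> V" "is_leaf_node (V,A) v \<or> is_tree_node (V,A) v" "v \<noteq> g" by (auto simp: VT_eq)
  have "v \<noteq> h" using v(2) st(6) ret_not_tree ret_not_leaf by blast
  hence vW: "v \<in> V - W" using v by (simp add: W_def)
  thus "v \<in> V_T (V - W, A')" using typ'[OF vW] v by (simp add: V_T_def)
qed

lemma mu':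
  assumes u: "u \<in> V - W"
  shows "mu_vec n (V - W, A') u = (mu_vec n (V,A) u)(0 := mu_vec n (V,A) u 0 - mu_vec n (V,A) u i,
            i := mu_vec n (V,A) u i - mu_vec n (V,A) u j)"
proof (rule ext)
  fix k
  let ?m = "mu_vec n (V,A)"
  have uW: "u \<notin> W" using u by simp
  have i0: "i \<noteq> 0" "j \<noteq> 0" using ij by auto
  note F1 = paths_formulas(1)[OF uW] and F2 = paths_formulas(2)[OF uW] and F3 = paths_formulas(3)[OF uW]
  have LiW: "Leaf i \<notin> W" "Leaf j \<notin> W" using Leafnhg by (auto simp: W_def)
  have mi: "?m u i = npaths A u (Leaf i)" using muk[of i u] st(1) i0 by simp
  have mj: "?m u j = npaths A u (Leaf j)" using muk[of j u] st(2) i0 by simp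
  show "mu_vec n (V - W, A') u k = ((?m u)(0 := ?m u 0 - ?m u i, i := ?m u i - ?m u j)) k"
  proof (cases "k = 0")
    case True
    have "(\<Sum>x\<in>V_H (V,A) - {h}. npaths A' u x) = (\<Sum>x\<in>V_H (V,A) - {h}. npaths A u x)"
    proof (rule sum.cong[OF refl])
      fix x assume x: "x \<in> V_H (V,A) - {h}"
      hence xr: "is_ret_node (V,A) x" "x \<noteq> h" by (auto simp: VH_eq)
      have "x \<noteq> g" using xr st(7) ret_not_tree by blast
      hence xW: "x \<notin> W" using xr by (simp add: W_def)
      have "x \<noteq> Leaf i" "x \<noteq> Leaf j" using xr(1) Li_leaf Lj_leaf ret_not_leaf by auto
      thus "npaths A' u x = npaths A u x" using F1[OF xW] F2[of x] by simp
    qed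
    also have "\<dots> = ?m u 0 - npaths A u h" using hVH finVH by (simp add: sum_diff1_nat mu0)
    also have "\<dots> = ?m u 0 - ?m u i"
    proof (cases "u = Leaf i")
      case True
      have "?m u 0 = 0" using True mu_leaf[OF st(1), of 0] i0 by simp
      thus ?thesis by simp
    next
      case False
      have "npaths A u (Leaf i) = npaths A u h" using F1[OF LiW(1)] F3 False LinLj B_Li_in by simp
      thus ?thesis using mi by simp
    qed
    finally show ?thesis using True i0 unfolding mu_vec_def snd_conv VH' by simp
  next
    case False
    show ?thesis
    proof (cases "k = i")
      case True
      have "npaths A' u (Leaf i) = npaths A u (Leaf i) - npaths A u (Leaf j)"
      proof (cases "u = Leaf j")
        case True
        thus ?thesis using F1[OF LiW(1)] F1[OF LiW(2)] F2[of "Leaf i"] LinLj B_Lj_out qnL fnL by simp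
      next
        case False
        thus ?thesis using F1[OF LiW(1)] F1[OF LiW(2)] F2[of "Leaf i"] LinLj B_Lj_in by simp
      qed
      moreover have "Leaf i \<in> V - W" using LiV LiW by simp
      ultimately show ?thesis using True i0 ij mi mj unfolding mu_vec_def fst_conv snd_conv by simp
    next
      case ki: False
      have LW: "Leaf k \<notin> W" using Leafnhg by (simp add: W_def)
      have "npaths A' u (Leaf k) = npaths A u (Leaf k)" using F1[OF LW] F2[of "Leaf k"] ki by simp
      thus ?thesis using False ki LW unfolding mu_vec_def fst_conv snd_conv by simp
    qed
  qed
qed

lemma mu_g: "mu_vec n (V,A) g = delta {0,i,j}"
proof (rule ext)
  fix k
  have i0: "i \<noteq> 0" "j \<noteq> 0" using ij by auto
  show "mu_vec n (V,A) g k = delta {0,i,j} k"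
    using mu_tree[OF st(7) st(9) st(11), of k] mu_ret[OF st(6) st(8), of k] mu_leaf[OF st(1), of k]
      mu_leaf[OF st(2), of k] st(3) i0 by (simp add: delta_def)
qed

lemma munet': "mu_net n (V - W, A') = image_mset (\<lambda>\<mu>. \<mu>(0 := \<mu> 0 - \<mu> i, i := \<mu> i - \<mu> j))
     (mu_net n (V,A) - {#delta {0,i,j}#})"
proof -
  let ?m = "mu_vec n (V,A)"
  have fin: "finite (V_T (V,A))" by (rule finVT)
  have "mset_set (V_T (V,A)) = add_mset g (mset_set (V_T (V,A) - {g}))"
    by (rule mset_set.remove[OF fin gVT])
  hence "mu_net n (V,A) = add_mset (delta {0,i,j}) (image_mset ?m (mset_set (V_T (V,A) - {g})))"
    using mu_g by (simp add: mu_net_def)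
  hence "mu_net n (V,A) - {#delta {0,i,j}#} = image_mset ?m (mset_set (V_T (V,A) - {g}))" by simp
  hence "image_mset (\<lambda>\<mu>. \<mu>(0 := \<mu> 0 - \<mu> i, i := \<mu> i - \<mu> j)) (mu_net n (V,A) - {#delta {0,i,j}#})
       = image_mset (\<lambda>u. (?m u)(0 := ?m u 0 - ?m u i, i := ?m u i - ?m u j)) (mset_set (V_T (V,A) - {g}))"
    by (simp add: image_mset.compositionality comp_def)
  also have "\<dots> = image_mset (mu_vec n (V - W, A')) (mset_set (V_T (V,A) - {g}))"
  proof (rule image_mset_cong)
    fix u assume "u \<in># mset_set (V_T (V,A) - {g})"
    hence "u \<in> V_T (V,A) - {g}" using fin by simp
    hence "u \<in> V - W" using hnVT by (auto simp: VT_eq W_def)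
    thus "(?m u)(0 := ?m u 0 - ?m u i, i := ?m u i - ?m u j) = mu_vec n (V - W, A') u" using mu' by simp
  qed
  also have "\<dots> = mu_net n (V - W, A')" unfolding mu_net_def VT' ..
  finally show ?thesis by simp
qed

lemma rred_main: "is_network n X (net_red (V,A) (i,j)) \<and>
   ms_red n (mu_net n (V,A)) (i,j) = Some (mu_net n (net_red (V,A) (i,j)))"
proof -
  have r: "ms_ret_cherry n (mu_net n (V,A)) (i,j)" by (rule ret_ms[OF nr ij])
  have nc: "\<not> ms_cherry n (mu_net n (V,A)) (i,j)" using ms_excl r by blast
  show ?thesis using net' red_eq r nc munet' by (simp add: ms_red_def)
qed

end



lemma step:
  assumes net: "is_network n X N" and ij: "i \<in> {1..n}" "j \<in> {1..n}"
  shows "(net_reducible N (i,j) \<longleftrightarrow> ms_reducible n (mu_net n N) (i,j)) \<and>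
         (net_reducible N (i,j) \<longrightarrow> (\<exists>X'. is_network n X' (net_red N (i,j)) \<and>
             ms_red n (mu_net n N) (i,j) = Some (mu_net n (net_red N (i,j)))))"
proof -
  obtain V A where N: "N = (V,A)" by (cases N)
  interpret netw n X V A using net N by (simp add: netw_def)
  have a: "net_reducible N (i,j) \<longleftrightarrow> ms_reducible n (mu_net n N) (i,j)"
    using reducible_iff[OF ij] N by simp
  have b: "\<exists>X'. is_network n X' (net_red N (i,j)) \<and> ms_red n (mu_net n N) (i,j) = Some (mu_net n (net_red N (i,j)))"
    if r: "net_reducible N (i,j)"
  proof (cases "net_cherry (V,A) (i,j)")
    case True
    interpret cred n X V A i j using True ij by (unfold_locales) simp_all
    show ?thesis using cred_main N by blast
  next
    case False
    hence "net_ret_cherry (V,A) (i,j)" using r N by (simp add: net_reducible_def)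
    then interpret rred n X V A i j using ij by (unfold_locales) simp_all
    show ?thesis using rred_main N by blast
  qed
  show ?thesis using a b by blast
qed

lemma main_aux:
  "\<forall>(N::'v net) X. is_network n X N \<longrightarrow> (\<forall>(i,j) \<in> set S. i \<in> {1..n} \<and> j \<in> {1..n}) \<longrightarrow> S \<noteq> [] \<longrightarrow>
     (net_seq_reducible N S \<longleftrightarrow> ms_seq_reducible n (mu_net n N) S) \<and>
     (net_seq_reducible N S \<longrightarrow> ms_seq_red n (mu_net n N) S = Some (mu_net n (net_seq_red N S)))"
proof (induction S)
  case Nil thus ?case by simp
next
  case (Cons s S)
  show ?case
  proof (intro allI impI)
    fix N :: "'v net" and X assume net: "is_network n X N" and ijs: "\<forall>(i,j) \<in> set (s # S). i \<in> {1..n} \<and> j \<in> {1..n}"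
    obtain i j where s: "s = (i,j)" by (cases s)
    have ij: "i \<in> {1..n}" "j \<in> {1..n}" using ijs s by auto
    have ijS: "\<forall>(i,j) \<in> set S. i \<in> {1..n} \<and> j \<in> {1..n}" using ijs by auto
    note st = step[OF net ij]
    show "(net_seq_reducible N (s # S) \<longleftrightarrow> ms_seq_reducible n (mu_net n N) (s # S)) \<and>
          (net_seq_reducible N (s # S) \<longrightarrow> ms_seq_red n (mu_net n N) (s # S) = Some (mu_net n (net_seq_red N (s # S))))"
    proof (cases "net_reducible N s")
      case False
      hence "\<not> ms_reducible n (mu_net n N) s" using st s by simp
      thus ?thesis using False by simp
    next
      case True
      obtain X' where X': "is_network n X' (net_red N s)"
        and red: "ms_red n (mu_net n N) s = Some (mu_net n (net_red N s))" using st s True by auto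
      have msr: "ms_reducible n (mu_net n N) s" using st s True by simp
      show ?thesis
      proof (cases "S = []")
        case True
        thus ?thesis using msr red \<open>net_reducible N s\<close> by simp
      next
        case False
        have IH: "(net_seq_reducible (net_red N s) S \<longleftrightarrow> ms_seq_reducible n (mu_net n (net_red N s)) S) \<and>
          (net_seq_reducible (net_red N s) S \<longrightarrow>
             ms_seq_red n (mu_net n (net_red N s)) S = Some (mu_net n (net_seq_red (net_red N s) S)))"
          using Cons.IH[THEN spec, THEN spec, THEN mp, THEN mp, THEN mp, OF X' ijS False] .
        thus ?thesis using msr red \<open>net_reducible N s\<close> False by simp
      qed
    qed
  qed
qed

theorem mainTheorem9:
  fixes n :: nat and X :: "nat set" and N :: "'v net" and S :: "(nat \<times> nat) list"
  assumes "is_network n X N"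
    and "orchard N"
    and "S \<noteq> []"
    and "\<forall>(i,j) \<in> set S. i \<in> {1..n} \<and> j \<in> {1..n}"
  shows "(net_seq_reducible N S \<longleftrightarrow> ms_seq_reducible n (mu_net n N) S) \<and>
         (net_seq_reducible N S \<longrightarrow>
           ms_seq_red n (mu_net n N) S = Some (mu_net n (net_seq_red N S)))"
  using main_aux assms(1,3,4) by blast


end
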